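(* Let $m$ be an integer. (i) If $m=N_2(1+(x-1)^5h(x))$ for some $h\in\mathbb Z[x]$ with $3\nmid h(1)$, then there is $F\in\mathbb Z[x]$ with $F(1)=N_1(F)=N_3(F)=3$, $N_2(F)=3m$ and $M_{27}(F)=3^4m$. (ii) If $m=N_3(1+(x-1)^5h(x))$ for some $h\in\mathbb Z[x]$ with $3\nmid h(1)$, then there is $F\in\mathbb Z[x]$ with $F(1)=N_1(F)=N_2(F)=3$, $N_3(F)=3m$ and $M_{27}(F)=3^4m$.
   Context: $M_{27}(F)=\prod_{z^{27}=1}F(z)$. For $k\geq1$, $\omega_k=e^{2\pi i/3^k}$ and $N_k(F)=\prod_{1\leq \ell\leq 3^k,\ 3\nmid \ell}F(\omega_k^\ell)$. *)

theory Defs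
  imports "HOL-Complex_Analysis.Complex_Analysis" "HOL-Computational_Algebra.Polynomial"
begin

definition cpoly :: "int poly \<Rightarrow> complex \<Rightarrow> complex" where
  "cpoly F z = poly (map_poly of_int F) z"

definition omega :: "nat \<Rightarrow> complex" where
  "omega k = exp (2 * pi * \<i> / of_nat (3 ^ k))"

definition Nk :: "nat \<Rightarrow> int poly \<Rightarrow> complex" where
  "Nk k F = (\<Prod>l \<in> {l. 1 \<le> l \<and> l \<le> 3 ^ k \<and> \<not> 3 dvd l}. cpoly F (omega k ^ l))"

definition M27 :: "int poly \<Rightarrow> complex" where
  "M27 F = (\<Prod>z \<in> {z::complex. z ^ 27 = 1}. cpoly F z)"

end

theory Submission
  imports Defs
begin

lemma cpoly_pCons: "cpoly (pCons a p) z = of_int a + z * cpoly p z"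
  by (simp add: cpoly_def map_poly_pCons)

lemma cpoly_0 [simp]: "cpoly 0 z = 0"
  by (simp add: cpoly_def)

lemma cpoly_add: "cpoly (p + q) z = cpoly p z + cpoly q z"
proof (induction p arbitrary: q)
  case 0 then show ?case by simp
next
  case (pCons a p)
  show ?case
  proof (cases q)
    case (pCons b q')
    then show ?thesis using pCons.IH[of q'] by (simp add: cpoly_pCons algebra_simps)
  qed
qed

lemma cpoly_smult: "cpoly (smult a q) z = of_int a * cpoly q z"
  by (induction q) (simp_all add: cpoly_pCons algebra_simps)

lemma cpoly_mult: "cpoly (p * q) z = cpoly p z * cpoly q z"
  by (induction p) (simp_all add: cpoly_pCons cpoly_add cpoly_smult algebra_simps)

lemma cpoly_1 [simp]: "cpoly 1 z = 1"
  by (simp add: cpoly_def)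

lemma cpoly_uminus: "cpoly (- p) z = - cpoly p z"
  using cpoly_smult[of "-1" p z] by simp

lemma cpoly_diff: "cpoly (p - q) z = cpoly p z - cpoly q z"
  using cpoly_add[of p "-q" z] by (simp add: cpoly_uminus)

lemma cpoly_power: "cpoly (p ^ n) z = cpoly p z ^ n"
  by (induction n) (simp_all add: cpoly_mult)

definition SS :: "nat \<Rightarrow> nat set" where
  "SS k = {l. 1 \<le> l \<and> l \<le> 3 ^ k \<and> \<not> 3 dvd l}"

lemma finite_SS [simp]: "finite (SS k)"
  unfolding SS_def by (rule finite_subset[of _ "{..3^k}"]) auto

lemma Nk_SS: "Nk k F = (\<Prod>l\<in>SS k. cpoly F (omega k ^ l))"
  by (simp add: Nk_def SS_def)

lemma Nk_mult: "Nk k (p * q) = Nk k p * Nk k q"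
  by (simp add: Nk_def cpoly_mult prod.distrib)

lemma Nk_1: "Nk k 1 = 1"
  by (simp add: Nk_def)

lemma Nk_power: "Nk k (p ^ n) = Nk k p ^ n"
proof (induction n)
  case 0 then show ?case by (simp add: Nk_1)
next
  case (Suc n) then show ?case by (simp add: Nk_mult)
qed

lemma Nk_cong:
  assumes "\<And>l. l \<in> SS k \<Longrightarrow> cpoly Phi (omega k ^ l) = 0"
  shows "Nk k (p + Phi * w) = Nk k p"
  unfolding Nk_SS by (rule prod.cong) (simp_all add: cpoly_add cpoly_mult assms)

lemma omega_pow: "omega k ^ j = exp (2 * of_real pi * \<i> * of_nat j / of_nat (3 ^ k))"
  unfolding omega_def by (simp add: exp_of_nat_mult[symmetric] mult_ac)

lemma omega_pow_eq1: "omega k ^ j = 1 \<longleftrightarrow> 3 ^ k dvd j"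
  unfolding omega_pow by (rule complex_root_unity_eq_1) simp

lemma omega_pow_period: "omega k ^ (3 ^ k) = 1"
  by (simp add: omega_pow_eq1)

lemma omega_pow_mod: "omega k ^ (j mod 3 ^ k) = omega k ^ j"
proof -
  have "omega k ^ j = omega k ^ (j div 3 ^ k * 3 ^ k + j mod 3 ^ k)" by (simp only: div_mult_mod_eq)
  also have "\<dots> = (omega k ^ 3 ^ k) ^ (j div 3 ^ k) * omega k ^ (j mod 3 ^ k)"
    by (metis power_add power_mult mult.commute)
  also have "\<dots> = omega k ^ (j mod 3 ^ k)"
    by (simp add: omega_pow_period)
  finally show ?thesis by simp
qed

lemma omega_0: "omega 0 = 1"
  by (simp add: omega_def)

lemma omega_Suc_cube: "omega (Suc k) ^ 3 = omega k"
proof -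
  have "omega (Suc k) ^ 3 = exp (of_nat 3 * (2 * of_real pi * \<i> / of_nat (3 ^ Suc k)))"
    unfolding omega_def by (subst exp_of_nat_mult) simp
  also have "of_nat 3 * (2 * of_real pi * \<i> / of_nat (3 ^ Suc k)) = (2 * of_real pi * \<i> / of_nat (3 ^ k) :: complex)"
    by (simp add: field_simps)
  finally show ?thesis by (simp add: omega_def)
qed

lemma omega_pow_to1: "omega k ^ (3 ^ (k - 1)) = omega 1" if "k \<ge> 1" for k
  using that
proof (induction k)
  case 0 then show ?case by simp
next
  case (Suc k)
  show ?case
  proof (cases "k = 0")
    case True then show ?thesis by simp
  next
    case False
    then have "omega (Suc k) ^ (3 ^ (Suc k - 1)) = (omega (Suc k) ^ 3) ^ (3 ^ (k - 1))"
      by (cases k) (simp_all add: power_mult[symmetric] mult.commute)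
    also have "\<dots> = omega 1" using Suc False by (simp add: omega_Suc_cube)
    finally show ?thesis .
  qed
qed

lemma cube_root_sum:
  assumes "\<not> 3 dvd l"
  shows "1 + omega 1 ^ l + (omega 1 ^ l) ^ 2 = 0"
proof -
  let ?y = "omega 1 ^ l"
  have "?y ^ 3 = 1"
    by (metis omega_pow_period power_mult power_one_right power_one mult.commute)
  moreover have "?y \<noteq> 1" using assms by (simp add: omega_pow_eq1)
  moreover have "?y ^ 3 - 1 = (?y - 1) * (1 + ?y + ?y ^ 2)" by algebra
  ultimately show ?thesis by simp
qed

lemma SS_1: "SS 1 = {1, 2}"
  unfolding SS_def by (rule set_eqI) (simp only: mem_Collect_eq insert_iff empty_iff power_one_right; presburger)

lemma SS_lt: "k \<ge> 1 \<Longrightarrow> l \<in> SS k \<Longrightarrow> l < 3 ^ k"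
  unfolding SS_def
  by (metis dvd_power le_neq_implies_less mem_Collect_eq not_one_le_zero zero_less_iff_neq_zero dvd_refl)

lemma SS_ndvd: "l \<in> SS k \<Longrightarrow> \<not> 3 dvd l"
  unfolding SS_def by auto

lemma pairing_bij:
  assumes k: "k \<ge> 1"
  shows "bij_betw (\<lambda>(a, b). a + b * 3 ^ k) (SS k \<times> {..<3}) (SS (Suc k))"
proof -
  let ?m = "3 ^ k :: nat"
  have m3: "3 dvd ?m" using k by (simp add: dvd_power)
  have inj: "inj_on (\<lambda>(a, b). a + b * ?m) (SS k \<times> {..<3})"
  proof (rule inj_onI)
    fix x y :: "nat \<times> nat"
    assume x: "x \<in> SS k \<times> {..<3}" and y: "y \<in> SS k \<times> {..<3}"
      and e0: "(\<lambda>(a, b). a + b * ?m) x = (\<lambda>(a, b). a + b * ?m) y"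
    obtain a b where xab: "x = (a, b)" by (cases x)
    obtain a' b' where yab: "y = (a', b')" by (cases y)
    have e: "a + b * ?m = a' + b' * ?m" using e0 xab yab by simp
    have a: "a < ?m" "a' < ?m" using x y xab yab SS_lt[OF k] by auto
    have "a = a'" using arg_cong[OF e, of "\<lambda>t. t mod ?m"] a by simp
    moreover have "b = b'" using arg_cong[OF e, of "\<lambda>t. t div ?m"] a by simp
    ultimately show "x = y" using xab yab by simp
  qed
  have sub0: "a + b * ?m \<in> SS (Suc k)" if x: "a \<in> SS k" "b \<in> {..<3::nat}" for a b
  proof -
    have a: "a < ?m" "1 \<le> a" "\<not> 3 dvd a" and b: "b < 3"
      using x SS_lt[OF k] by (auto simp: SS_def)
    have "a + b * ?m < 3 * ?m"
    proof -
      have "b * ?m \<le> 2 * ?m" using b by simp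
      then show ?thesis using a by linarith
    qed
    moreover have "\<not> 3 dvd (a + b * ?m)"
      using a m3 by (simp add: dvd_add_left_iff)
    ultimately show "a + b * ?m \<in> SS (Suc k)"
      using a by (simp add: SS_def)
  qed
  have sub: "(\<lambda>(a, b). a + b * ?m) ` (SS k \<times> {..<3}) \<subseteq> SS (Suc k)"
    using sub0 by auto
  have sup: "SS (Suc k) \<subseteq> (\<lambda>(a, b). a + b * ?m) ` (SS k \<times> {..<3})"
  proof
    fix l assume l: "l \<in> SS (Suc k)"
    have l1: "l < 3 * ?m" using SS_lt[of "Suc k" l] l by simp
    have nd: "\<not> 3 dvd l" using l by (simp add: SS_def)
    define a where "a = l mod ?m"
    define b where "b = l div ?m"
    have lab: "l = a + b * ?m" unfolding a_def b_def by (metis mod_div_mult_eq add.commute)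
    have "\<not> 3 dvd a" using nd m3 lab by (simp add: dvd_add_left_iff)
    moreover have "a \<ge> 1" using \<open>\<not> 3 dvd a\<close> by (cases a) auto
    moreover have "a \<le> ?m" unfolding a_def by (simp add: less_imp_le)
    moreover have "b < 3" unfolding b_def using l1 by (simp add: less_mult_imp_div_less)
    ultimately have "(a, b) \<in> SS k \<times> {..<3}" by (simp add: SS_def)
    then show "l \<in> (\<lambda>(a, b). a + b * ?m) ` (SS k \<times> {..<3})"
      using lab by force
  qed
  show ?thesis unfolding bij_betw_def using inj sub sup by blast
qed

lemma pairing_prod:
  assumes k: "k \<ge> 1"
  shows "(\<Prod>l\<in>SS (Suc k). f l) = (\<Prod>a\<in>SS k. \<Prod>b<3. f (a + b * 3 ^ k))"
proof -
  have "(\<Prod>a\<in>SS k. \<Prod>b<3. f (a + b * 3 ^ k)) = (\<Prod>x\<in>SS k \<times> {..<3}. f ((\<lambda>(a, b). a + b * 3 ^ k) x))"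
    by (simp add: prod.cartesian_product split_def)
  also have "\<dots> = (\<Prod>l\<in>SS (Suc k). f l)"
    by (rule prod.reindex_bij_betw[OF pairing_bij[OF k]])
  finally show ?thesis by simp
qed

lemma omega_pair:
  assumes k: "k \<ge> 1"
  shows "omega (Suc k) ^ (a + b * 3 ^ k) = omega (Suc k) ^ a * omega 1 ^ b"
proof -
  have "omega (Suc k) ^ (3 ^ k) = omega 1" using omega_pow_to1[of "Suc k"] by simp
  then show ?thesis by (simp add: power_add power_mult mult.commute[of b])
qed

lemma omega1_cube: "omega 1 ^ 3 = 1"
  using omega_pow_period[of 1] by simp

lemma omega1_sum: "1 + omega 1 + omega 1 ^ 2 = 0"
  using cube_root_sum[of 1] by simp

lemma omega1_cube': "omega (Suc 0) ^ 3 = 1"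
  using omega1_cube by simp

lemma omega1_sum': "1 + omega (Suc 0) + omega (Suc 0) ^ 2 = 0"
  using omega1_sum by simp

lemmas om1 = omega1_cube omega1_sum omega1_cube' omega1_sum'

lemma Nk_pairing:
  assumes k: "k \<ge> 1"
  shows "Nk (Suc k) p = (\<Prod>a\<in>SS k. \<Prod>b<3. cpoly p (omega (Suc k) ^ a * omega 1 ^ b))"
  unfolding Nk_SS by (subst pairing_prod[OF k]) (simp add: omega_pair[OF k])

lemma cpoly_om: "cpoly [:1, -1:] z = 1 - z"
  by (simp add: cpoly_pCons)

lemma prod_three: "(\<Prod>b<(3::nat). f b) = f 0 * f 1 * (f 2 :: complex)"
  by (simp add: numeral_3_eq_3 numeral_2_eq_2 lessThan_Suc)

lemma N1_om: "Nk 1 [:1, -1:] = 3"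
proof -
  have "Nk 1 [:1, -1:] = (1 - omega 1) * (1 - omega 1 ^ 2)"
    unfolding Nk_SS SS_1 by (simp add: cpoly_om)
  also have "\<dots> = 2 - (1 + omega 1 + omega 1 ^ 2) + omega 1 ^ 3"
    by algebra
  finally show ?thesis by (simp add: om1)
qed

lemma Nk_om_step:
  assumes k: "k \<ge> 1"
  shows "Nk (Suc k) [:1, -1:] = Nk k [:1, -1:]"
proof -
  have "Nk (Suc k) [:1, -1:] = (\<Prod>a\<in>SS k. \<Prod>b<3. 1 - omega (Suc k) ^ a * omega 1 ^ b)"
    by (simp add: Nk_pairing[OF k] cpoly_om)
  also have "\<dots> = (\<Prod>a\<in>SS k. 1 - omega k ^ a)"
  proof (rule prod.cong[OF refl])
    fix a
    let ?y = "omega (Suc k) ^ a" and ?w = "omega 1"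
    have "(\<Prod>b<3. 1 - ?y * ?w ^ b) = (1 - ?y) * (1 - ?y * ?w) * (1 - ?y * ?w ^ 2)"
      by (simp add: prod_three)
    also have "\<dots> = 1 - ?y ^ 3 * ?w ^ 3 + ?y * (?y * ?w - 1) * (1 + ?w + ?w ^ 2)"
      by algebra
    also have "\<dots> = 1 - ?y ^ 3" by (simp add: om1)
    also have "?y ^ 3 = omega k ^ a"
      by (simp add: power_mult[symmetric] mult.commute[of a] power_mult omega_Suc_cube)
    finally show "(\<Prod>b<3. 1 - ?y * ?w ^ b) = 1 - omega k ^ a" .
  qed
  also have "\<dots> = Nk k [:1, -1:]"
    by (simp add: Nk_SS cpoly_om)
  finally show ?thesis .
qed

lemma N2_om: "Nk 2 [:1, -1:] = 3"
  using Nk_om_step[of 1] N1_om by (simp add: numeral_2_eq_2)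

lemma N3_om: "Nk 3 [:1, -1:] = 3"
  using Nk_om_step[of 2] N2_om by (simp add: numeral_3_eq_3 numeral_2_eq_2)

lemma cpoly_neg1: "cpoly (-1) z = -1"
  by (simp add: cpoly_uminus)

lemma N1_neg1: "Nk 1 (-1) = 1"
  unfolding Nk_SS SS_1 by (simp add: cpoly_neg1)

lemma Nk_neg1_step:
  assumes k: "k \<ge> 1"
  shows "Nk (Suc k) (-1) = Nk k (-1)"
proof -
  have "Nk (Suc k) (-1) = (\<Prod>a\<in>SS k. \<Prod>b<(3::nat). (-1::complex))"
    by (simp only: Nk_pairing[OF k] cpoly_neg1)
  also have "\<dots> = (\<Prod>a\<in>SS k. (-1::complex))"
    by (simp only: prod_three) simp
  also have "\<dots> = Nk k (-1)"
    by (simp only: Nk_SS cpoly_neg1)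
  finally show ?thesis .
qed

lemma N2_neg1: "Nk 2 (-1) = 1"
  using Nk_neg1_step[of 1] N1_neg1 by (simp add: numeral_2_eq_2)

lemma N3_neg1: "Nk 3 (-1) = 1"
  using Nk_neg1_step[of 2] N2_neg1 by (simp add: numeral_3_eq_3 numeral_2_eq_2)

lemma omega2_cube: "omega 2 ^ 3 = omega 1"
  using omega_Suc_cube[of 1] by (simp add: numeral_2_eq_2)

lemma omega3_cube: "omega 3 ^ 3 = omega 2"
  using omega_Suc_cube[of 2] by (simp add: numeral_3_eq_3 numeral_2_eq_2)

lemma cpoly_Phi3: "cpoly [:1,1,1:] z = 1 + z + z ^ 2"
  by (simp add: cpoly_pCons algebra_simps power2_eq_square)

lemma cpoly_Phi9: "cpoly [:1,0,0,1,0,0,1:] z = 1 + z ^ 3 + (z ^ 3) ^ 2"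
  by (simp add: cpoly_pCons algebra_simps flip: power_Suc power_add power_mult) (simp add: numeral_eq_Suc)

lemma cpoly_Phi27: "cpoly [:1,0,0,0,0,0,0,0,0,1,0,0,0,0,0,0,0,0,1:] z = 1 + z ^ 9 + (z ^ 9) ^ 2"
  by (simp add: cpoly_pCons algebra_simps flip: power_Suc power_add power_mult) (simp add: numeral_eq_Suc)

lemma van3: "l \<in> SS 1 \<Longrightarrow> cpoly [:1,1,1:] (omega 1 ^ l) = 0"
  using cube_root_sum[of l] by (simp add: cpoly_Phi3 SS_ndvd)

lemma van9: "l \<in> SS 2 \<Longrightarrow> cpoly [:1,0,0,1,0,0,1:] (omega 2 ^ l) = 0"
proof -
  assume l: "l \<in> SS 2"
  have "(omega 2 ^ l) ^ 3 = omega 1 ^ l"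
    by (metis omega2_cube power_mult mult.commute)
  then show ?thesis using cube_root_sum[of l] SS_ndvd[OF l] by (simp add: cpoly_Phi9)
qed

lemma van27: "l \<in> SS 3 \<Longrightarrow> cpoly [:1,0,0,0,0,0,0,0,0,1,0,0,0,0,0,0,0,0,1:] (omega 3 ^ l) = 0"
proof -
  assume l: "l \<in> SS 3"
  have "(omega 3 ^ l) ^ 9 = ((omega 3 ^ 3) ^ 3) ^ l"
    by (simp add: power_mult[symmetric] mult.commute)
  also have "\<dots> = omega 1 ^ l" by (simp add: omega3_cube omega2_cube)
  finally show ?thesis using cube_root_sum[of l] SS_ndvd[OF l] by (simp add: cpoly_Phi27)
qed

lemma omega_ne1:
  assumes k: "k \<ge> 1" and l: "l \<in> SS k"
  shows "omega k ^ l \<noteq> 1"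
proof -
  have "\<not> 3 ^ k dvd l"
  proof
    assume "3 ^ k dvd l"
    moreover have "3 dvd (3::nat) ^ k" using k by (simp add: dvd_power)
    ultimately have "3 dvd l" by (rule dvd_trans[rotated])
    then show False using SS_ndvd[OF l] by simp
  qed
  then show ?thesis by (simp add: omega_pow_eq1)
qed

lemma cancel_mod:
  fixes a x y m :: nat
  assumes "coprime m a" "(a * x) mod m = (a * y) mod m" "x < m" "y < m"
  shows "x = y"
proof -
  have "(int a * int x) mod int m = (int a * int y) mod int m"
    using assms(2) by (metis of_nat_mult zmod_int)
  then have "int m dvd int a * (int x - int y)"
    by (simp add: mod_eq_dvd_iff right_diff_distrib)
  moreover have "coprime (int m) (int a)" using assms(1) by simp
  ultimately have "int m dvd int x - int y"
    using coprime_dvd_mult_right_iff coprime_dvd_mult_left_iff by blast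
  then have "int x mod int m = int y mod int m" by (simp add: mod_eq_dvd_iff)
  then show ?thesis using assms(3,4) by (simp flip: zmod_int)
qed

lemma perm_bij:
  assumes k: "k \<ge> 1" and a: "\<not> 3 dvd a"
  shows "(\<lambda>l. (a * l) mod 3 ^ k) ` SS k = SS k"
    and "inj_on (\<lambda>l. (a * l) mod 3 ^ k) (SS k)"
proof -
  let ?m = "3 ^ k :: nat"
  have m3: "3 dvd ?m" using k by (simp add: dvd_power)
  have p3: "prime (3::nat)" by simp
  have c3: "coprime 3 a"
    using a p3 by (simp add: prime_imp_coprime)
  have cop: "coprime ?m a"
    using c3 k by simp
  have into: "(a * l) mod ?m \<in> SS k" if l: "l \<in> SS k" for l
  proof -
    have nd: "\<not> 3 dvd l" using l by (simp add: SS_def)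
    have nd2: "\<not> 3 dvd (a * l)"
      using nd a p3 by (simp add: prime_dvd_mult_iff)
    have nd3: "\<not> 3 dvd ((a * l) mod ?m)"
      using nd2 m3 by (simp add: dvd_mod_iff)
    moreover have "(a * l) mod ?m \<noteq> 0"
    proof
      assume "(a * l) mod ?m = 0"
      then show False using nd3 by simp
    qed
    moreover have "(a * l) mod ?m \<le> ?m" by (simp add: less_imp_le)
    ultimately show ?thesis by (simp add: SS_def)
  qed
  show inj: "inj_on (\<lambda>l. (a * l) mod ?m) (SS k)"
  proof (rule inj_onI)
    fix x y assume x: "x \<in> SS k" and y: "y \<in> SS k" and e: "(a * x) mod ?m = (a * y) mod ?m"
    have xm: "x < ?m" and ym: "y < ?m" using SS_lt[OF k] x y by auto
    show "x = y" using cancel_mod[OF cop e xm ym] .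
  qed
  have "(\<lambda>l. (a * l) mod ?m) ` SS k \<subseteq> SS k" using into by blast
  then show "(\<lambda>l. (a * l) mod ?m) ` SS k = SS k"
    using endo_inj_surj[OF finite_SS _ inj] by blast
qed

lemma perm_prod:
  assumes k: "k \<ge> 1" and a: "\<not> 3 dvd a"
  shows "(\<Prod>l\<in>SS k. f (omega k ^ (a * l))) = (\<Prod>l\<in>SS k. f (omega k ^ l))"
proof -
  have "(\<Prod>l\<in>SS k. f (omega k ^ l)) = (\<Prod>l\<in>(\<lambda>l. (a * l) mod 3 ^ k) ` SS k. f (omega k ^ l))"
    using perm_bij(1)[OF k a] by simp
  also have "\<dots> = (\<Prod>l\<in>SS k. f (omega k ^ ((a * l) mod 3 ^ k)))"
    by (subst prod.reindex[OF perm_bij(2)[OF k a]]) simp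
  also have "\<dots> = (\<Prod>l\<in>SS k. f (omega k ^ (a * l)))"
    by (simp add: omega_pow_mod)
  finally show ?thesis by simp
qed

lemma Nk_cycl:
  assumes k: "k \<ge> 1" and a: "\<not> 3 dvd a" and p: "\<And>z. cpoly p z * (z - 1) = z ^ a - 1"
  shows "Nk k p = 1"
proof -
  have nz: "(\<Prod>l\<in>SS k. omega k ^ l - 1) \<noteq> 0"
    using omega_ne1[OF k] by (simp add: prod_zero_iff)
  have "Nk k p * (\<Prod>l\<in>SS k. omega k ^ l - 1) = (\<Prod>l\<in>SS k. (omega k ^ l) ^ a - 1)"
    unfolding Nk_SS prod.distrib[symmetric] using p by simp
  also have "\<dots> = (\<Prod>l\<in>SS k. omega k ^ (a * l) - 1)"
    by (simp add: power_mult[symmetric] mult.commute)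
  also have "\<dots> = (\<Prod>l\<in>SS k. omega k ^ l - 1)"
    using perm_prod[OF k a, of "\<lambda>z. z - 1"] by simp
  finally show ?thesis using nz by simp
qed

lemma cpoly_of_int: "cpoly F (of_int x) = of_int (poly F x)"
  by (induction F) (simp_all add: cpoly_pCons)

lemma prod_split:
  "(\<Prod>j<3 ^ Suc k. f (omega (Suc k) ^ j)) =
     (\<Prod>l\<in>SS (Suc k). f (omega (Suc k) ^ l)) * (\<Prod>a<3 ^ k. f (omega k ^ a))"
proof -
  let ?M = "(\<lambda>a. 3 * a) ` {..<3 ^ k :: nat}"
  have U: "{..<3 ^ Suc k} = SS (Suc k) \<union> ?M"
  proof (rule set_eqI, rule iffI)
    fix j :: nat assume "j \<in> {..<3 ^ Suc k}"
    then have j: "j < 3 * 3 ^ k" by simp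
    show "j \<in> SS (Suc k) \<union> ?M"
    proof (cases "3 dvd j")
      case True
      then obtain a where "j = 3 * a" by blast
      then show ?thesis using j by auto
    next
      case False
      then have "j \<ge> 1" by (cases j) auto
      then show ?thesis using False j by (simp add: SS_def)
    qed
  next
    fix j :: nat assume "j \<in> SS (Suc k) \<union> ?M"
    then show "j \<in> {..<3 ^ Suc k}" using SS_lt[of "Suc k" j] by auto
  qed
  have D: "SS (Suc k) \<inter> ?M = {}" by (auto simp: SS_def)
  have "(\<Prod>j<3 ^ Suc k. f (omega (Suc k) ^ j)) =
      (\<Prod>l\<in>SS (Suc k). f (omega (Suc k) ^ l)) * (\<Prod>j\<in>?M. f (omega (Suc k) ^ j))"
    unfolding U by (rule prod.union_disjoint) (use D in auto)
  also have "(\<Prod>j\<in>?M. f (omega (Suc k) ^ j)) = (\<Prod>a<3 ^ k. f (omega (Suc k) ^ (3 * a)))"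
    by (subst prod.reindex) (auto simp: inj_on_def)
  also have "\<dots> = (\<Prod>a<3 ^ k. f (omega k ^ a))"
    by (simp add: power_mult omega_Suc_cube)
  finally show ?thesis .
qed

lemma M27_split: "M27 F = of_int (poly F 1) * Nk 1 F * Nk 2 F * Nk 3 F"
proof -
  let ?f = "cpoly F"
  have R: "{z::complex. z ^ 27 = 1} = (\<lambda>j. omega 3 ^ j) ` {..<27}"
    using complex_roots_unity[of 27] by (auto simp: omega_pow)
  have I: "inj_on (\<lambda>j. omega 3 ^ j) {..<27}"
  proof (rule inj_onI)
    fix x y :: nat assume "x \<in> {..<27}" "y \<in> {..<27}" "omega 3 ^ x = omega 3 ^ y"
    then show "x = y" using complex_root_unity_eq[of 27 x y] by (simp add: omega_pow)
  qed
  have M: "M27 F = (\<Prod>j<27. ?f (omega 3 ^ j))"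
    unfolding M27_def R by (simp only: prod.reindex[OF I] o_def)
  have e1: "(3::nat) ^ Suc 2 = 27" "Suc 2 = (3::nat)" "(3::nat) ^ 2 = 9" "(3::nat) ^ 3 = 27" by simp_all
  have P3: "(\<Prod>j<27. ?f (omega 3 ^ j)) = Nk 3 F * (\<Prod>a<9. ?f (omega 2 ^ a))"
    using prod_split[where k=2 and f="?f"] unfolding Nk_SS by (simp only: e1)
  have e2: "(3::nat) ^ Suc 1 = 9" "Suc 1 = (2::nat)" "(3::nat) ^ 1 = 3" "(3::nat) ^ 2 = 9" by simp_all
  have P2: "(\<Prod>a<9. ?f (omega 2 ^ a)) = Nk 2 F * (\<Prod>a<3. ?f (omega 1 ^ a))"
    using prod_split[where k=1 and f="?f"] unfolding Nk_SS by (simp only: e2)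
  have e3: "(3::nat) ^ Suc 0 = 3" "Suc 0 = (1::nat)" "(3::nat) ^ 0 = 1" "(3::nat) ^ 1 = 3" by simp_all
  have P1: "(\<Prod>a<3. ?f (omega 1 ^ a)) = Nk 1 F * (\<Prod>a<1. ?f (omega 0 ^ a))"
    using prod_split[where k=0 and f="?f"] unfolding Nk_SS by (simp only: e3)
  have P0: "(\<Prod>a<1::nat. ?f (omega 0 ^ a)) = of_int (poly F 1)"
    using cpoly_of_int[of F 1] by (simp add: omega_0)
  show ?thesis unfolding M P3 P2 P1 P0 by (simp add: mult_ac)
qed

lemma N1_eq: "Nk 1 p = cpoly p (omega 1) * cpoly p (omega 1 ^ 2)"
  unfolding Nk_SS SS_1 by simp

lemma cpoly_x: "cpoly [:0, 1:] z = z" by (simp add: cpoly_pCons)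
lemma cpoly_mx: "cpoly [:0, -1:] z = - z" by (simp add: cpoly_pCons)
lemma cpoly_mx2: "cpoly [:0, 0, -1:] z = - (z * z)" by (simp add: cpoly_pCons)

lemma N1_x: "Nk 1 [:0, 1:] = 1"
  unfolding N1_eq cpoly_x using omega1_cube by algebra

lemma N1_mx: "Nk 1 [:0, -1:] = 1"
  unfolding N1_eq cpoly_mx using omega1_cube by algebra

lemma N1_mx2: "Nk 1 [:0, 0, -1:] = 1"
  unfolding N1_eq cpoly_mx2 using omega1_cube by algebra

lemma Nk_c2: "k \<ge> 1 \<Longrightarrow> Nk k [:1,1:] = 1"
  by (rule Nk_cycl[where a=2]) (simp_all add: cpoly_pCons power2_eq_square algebra_simps)

lemma Nk_c4: "k \<ge> 1 \<Longrightarrow> Nk k [:1,1,1,1:] = 1"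
  by (rule Nk_cycl[where a=4]) (simp_all add: cpoly_pCons, algebra)

lemma Nk_c5: "k \<ge> 1 \<Longrightarrow> Nk k [:1,1,1,1,1:] = 1"
  by (rule Nk_cycl[where a=5]) (simp_all add: cpoly_pCons, algebra)

lemma Nk_c7: "k \<ge> 1 \<Longrightarrow> Nk k [:1,1,1,1,1,1,1:] = 1"
  by (rule Nk_cycl[where a=7]) (simp_all add: cpoly_pCons, algebra)

lemma poly_P9_1: "poly [:1,0,0,1,0,0,1::int:] 1 = 3" by simp
lemma poly_P27_1: "poly [:1,0,0,0,0,0,0,0,0,1,0,0,0,0,0,0,0,0,1::int:] 1 = 3" by simp

lemma gen_i:
  fixes h \<rho> \<alpha> \<beta> u ea eb Kz Ka Kb Qx Qy Qa Qb :: "int poly"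
  defines "P3 \<equiv> [:1,1,1:] :: int poly"
    and "P9 \<equiv> [:1,0,0,1,0,0,1:] :: int poly"
    and "P27 \<equiv> [:1,0,0,0,0,0,0,0,0,1,0,0,0,0,0,0,0,0,1:] :: int poly"
  assumes hdec: "h = \<rho> + [:3:] * \<alpha> + [:-1,1:] ^ 3 * \<beta>"
    and I1: "[:1,-1:] * u * (1 + [:-1,1:] ^ 5 * \<rho>) + P9 * Kz = [:1,-1:] * ea + P3 * Qx"
    and I3: "[:1,-1:] * u * (1 + [:-1,1:] ^ 5 * \<rho>) + P9 * Kz = [:1,-1:] * eb + P27 * Qy"
    and Ia: "[:1,-1:] * u * ([:3:] * [:-1,1:] ^ 5) + P9 * Ka = [:-1,1:] * P3 * P27 * Qa"
    and Ib: "[:1,-1:] * u * [:-1,1:] ^ 8 + P9 * Kb = [:-1,1:] * P3 * P27 * Qb"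
    and KZ1: "poly Kz 1 = 1"
    and Nu: "Nk 2 u = 1" and NeA: "Nk 1 ea = 1" and NeB: "Nk 3 eb = 1"
  shows "\<exists>F. poly F 1 = 3 \<and> Nk 1 F = 3 \<and> Nk 3 F = 3 \<and>
           Nk 2 F = 3 * Nk 2 (1 + [:-1,1:] ^ 5 * h) \<and> M27 F = 81 * Nk 2 (1 + [:-1,1:] ^ 5 * h)"
proof -
  define G where "G = 1 + [:-1,1:] ^ 5 * h"
  define F where "F = [:1,-1:] * u * G + P9 * (Kz + \<alpha> * Ka + \<beta> * Kb)"
  have split: "F = ([:1,-1:] * u * (1 + [:-1,1:] ^ 5 * \<rho>) + P9 * Kz)
       + \<alpha> * ([:1,-1:] * u * ([:3:] * [:-1,1:] ^ 5) + P9 * Ka)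
       + \<beta> * ([:1,-1:] * u * [:-1,1:] ^ 8 + P9 * Kb)"
    unfolding F_def G_def hdec by algebra
  have F1: "F = [:1,-1:] * ea + P3 * (Qx + \<alpha> * ([:-1,1:] * P27 * Qa) + \<beta> * ([:-1,1:] * P27 * Qb))"
    unfolding split I1 Ia Ib by algebra
  have F3: "F = [:1,-1:] * eb + P27 * (Qy + \<alpha> * ([:-1,1:] * P3 * Qa) + \<beta> * ([:-1,1:] * P3 * Qb))"
    unfolding split I3 Ia Ib by algebra
  have "Nk 1 F = Nk 1 ([:1,-1:] * ea)"
    unfolding F1 P3_def by (rule Nk_cong[OF van3])
  then have N1: "Nk 1 F = 3" by (simp only: Nk_mult N1_om NeA) simp
  have "Nk 3 F = Nk 3 ([:1,-1:] * eb)"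
    unfolding F3 P27_def by (rule Nk_cong[OF van27])
  then have N3: "Nk 3 F = 3" by (simp only: Nk_mult N3_om NeB) simp
  have "Nk 2 F = Nk 2 ([:1,-1:] * u * G)"
    unfolding F_def P9_def by (rule Nk_cong[OF van9])
  then have N2: "Nk 2 F = 3 * Nk 2 G" by (simp only: Nk_mult N2_om Nu) simp
  have Ka1: "poly Ka 1 = 0" using arg_cong[OF Ia, of "\<lambda>p. poly p 1"] by (simp add: P9_def)
  have Kb1: "poly Kb 1 = 0" using arg_cong[OF Ib, of "\<lambda>p. poly p 1"] by (simp add: P9_def)
  have PF: "poly F 1 = 3" unfolding F_def by (simp add: P9_def KZ1 Ka1 Kb1)
  have M: "M27 F = 81 * Nk 2 G" unfolding M27_split PF N1 N2 N3 by simp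
  show ?thesis using PF N1 N2 N3 M unfolding G_def by blast
qed

lemma gen_ii:
  fixes h \<rho> \<alpha> \<beta> u ea eb Kz Ka Kb Qx Qy Qa Qb :: "int poly"
  defines "P3 \<equiv> [:1,1,1:] :: int poly"
    and "P9 \<equiv> [:1,0,0,1,0,0,1:] :: int poly"
    and "P27 \<equiv> [:1,0,0,0,0,0,0,0,0,1,0,0,0,0,0,0,0,0,1:] :: int poly"
  assumes hdec: "h = \<rho> + [:3:] * \<alpha> + [:-1,1:] ^ 3 * \<beta>"
    and I1: "[:1,-1:] * u * (1 + [:-1,1:] ^ 5 * \<rho>) + P27 * Kz = [:1,-1:] * ea + P3 * Qx"
    and I2: "[:1,-1:] * u * (1 + [:-1,1:] ^ 5 * \<rho>) + P27 * Kz = [:1,-1:] * eb + P9 * Qy"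
    and Ia: "[:1,-1:] * u * ([:3:] * [:-1,1:] ^ 5) + P27 * Ka = [:-1,1:] * P3 * P9 * Qa"
    and Ib: "[:1,-1:] * u * [:-1,1:] ^ 8 + P27 * Kb = [:-1,1:] * P3 * P9 * Qb"
    and KZ1: "poly Kz 1 = 1"
    and Nu: "Nk 3 u = 1" and NeA: "Nk 1 ea = 1" and NeB: "Nk 2 eb = 1"
  shows "\<exists>F. poly F 1 = 3 \<and> Nk 1 F = 3 \<and> Nk 2 F = 3 \<and>
           Nk 3 F = 3 * Nk 3 (1 + [:-1,1:] ^ 5 * h) \<and> M27 F = 81 * Nk 3 (1 + [:-1,1:] ^ 5 * h)"
proof -
  define G where "G = 1 + [:-1,1:] ^ 5 * h"
  define F where "F = [:1,-1:] * u * G + P27 * (Kz + \<alpha> * Ka + \<beta> * Kb)"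
  have split: "F = ([:1,-1:] * u * (1 + [:-1,1:] ^ 5 * \<rho>) + P27 * Kz)
       + \<alpha> * ([:1,-1:] * u * ([:3:] * [:-1,1:] ^ 5) + P27 * Ka)
       + \<beta> * ([:1,-1:] * u * [:-1,1:] ^ 8 + P27 * Kb)"
    unfolding F_def G_def hdec by algebra
  have F1: "F = [:1,-1:] * ea + P3 * (Qx + \<alpha> * ([:-1,1:] * P9 * Qa) + \<beta> * ([:-1,1:] * P9 * Qb))"
    unfolding split I1 Ia Ib by algebra
  have F2: "F = [:1,-1:] * eb + P9 * (Qy + \<alpha> * ([:-1,1:] * P3 * Qa) + \<beta> * ([:-1,1:] * P3 * Qb))"
    unfolding split I2 Ia Ib by algebra
  have "Nk 1 F = Nk 1 ([:1,-1:] * ea)"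
    unfolding F1 P3_def by (rule Nk_cong[OF van3])
  then have N1: "Nk 1 F = 3" by (simp only: Nk_mult N1_om NeA) simp
  have "Nk 2 F = Nk 2 ([:1,-1:] * eb)"
    unfolding F2 P9_def by (rule Nk_cong[OF van9])
  then have N2: "Nk 2 F = 3" by (simp only: Nk_mult N2_om NeB) simp
  have "Nk 3 F = Nk 3 ([:1,-1:] * u * G)"
    unfolding F_def P27_def by (rule Nk_cong[OF van27])
  then have N3: "Nk 3 F = 3 * Nk 3 G" by (simp only: Nk_mult N3_om Nu) simp
  have Ka1: "poly Ka 1 = 0" using arg_cong[OF Ia, of "\<lambda>p. poly p 1"] by (simp add: P27_def)
  have Kb1: "poly Kb 1 = 0" using arg_cong[OF Ib, of "\<lambda>p. poly p 1"] by (simp add: P27_def)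
  have PF: "poly F 1 = 3" unfolding F_def by (simp add: P27_def KZ1 Ka1 Kb1)
  have M: "M27 F = 81 * Nk 3 G" unfolding M27_split PF N1 N2 N3 by simp
  show ?thesis using PF N1 N2 N3 M unfolding G_def by blast
qed

lemma N2_c2: "Nk 2 [:1,1:] = 1" by (rule Nk_c2) simp

lemma N2_c4: "Nk 2 [:1,1,1,1:] = 1" by (rule Nk_c4) simp

lemma N2_c5: "Nk 2 [:1,1,1,1,1:] = 1" by (rule Nk_c5) simp

lemma N2_c7: "Nk 2 [:1,1,1,1,1,1,1:] = 1" by (rule Nk_c7) simp

lemma N3_c2: "Nk 3 [:1,1:] = 1" by (rule Nk_c2) simp

lemma N3_c4: "Nk 3 [:1,1,1,1:] = 1" by (rule Nk_c4) simp

lemma N3_c5: "Nk 3 [:1,1,1,1,1:] = 1" by (rule Nk_c5) simp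

lemma N3_c7: "Nk 3 [:1,1,1,1,1,1,1:] = 1" by (rule Nk_c7) simp

lemma tail_i_1_a: "[:1,-1::int:] * 1 * ([:3:] * [:-1,1:] ^ 5) + [:1,0,0,1,0,0,1:] * [:-4, -9, 33, -42, 42, -42, 42, -30, 12, -7, -3, 18, -21, 21, -21, 21, -15, 6, -7, 3, 3:] = [:-1,1:] * [:1,1,1:] * [:1,0,0,0,0,0,0,0,0,1,0,0,0,0,0,0,0,0,1:] * [:7, -9, 12, -7, 3, 3:]"
  by (rule poly_eq_poly_eq_iff[THEN iffD1], rule ext, simp, algebra)

lemma tail_i_1_b: "[:1,-1::int:] * 1 * [:-1,1:] ^ 8 + [:1,0,0,1,0,0,1:] * [:-1, -3, -15, 57, -90, 108, -112, 108, -90, 56, -30, 3, 28, -45, 54, -56, 54, -45, 28, -21, 12:] = [:-1,1:] * [:1,1,1:] * [:1,0,0,0,0,0,0,0,0,1,0,0,0,0,0,0,0,0,1:] * [:0, 12, -21, 28, -21, 12:]"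
  by (rule poly_eq_poly_eq_iff[THEN iffD1], rule ext, simp, algebra)

lemma case_i_100:
  fixes h \<alpha> \<beta> :: "int poly" and r0 r1 r2 :: int
  assumes hd: "h = [:r0:] + [:-1,1:] * [:r1:] + [:-1,1:] ^ 2 * [:r2:] + [:3:] * \<alpha> + [:-1,1:] ^ 3 * \<beta>"
    and "r0 = 1" "r1 = 0" "r2 = 0"
  shows "\<exists>F. poly F 1 = 3 \<and> Nk 1 F = 3 \<and> Nk 3 F = 3 \<and> Nk 2 F = 3 * Nk 2 (1 + [:-1,1:] ^ 5 * h) \<and> M27 F = 81 * Nk 2 (1 + [:-1,1:] ^ 5 * h)"
  apply (rule gen_i[where \<rho>="[:1:] + [:-1,1:] * [:0:] + [:-1,1:] ^ 2 * [:0:]" and \<alpha>=\<alpha> and \<beta>=\<beta> and u="1" and ea="[:0, 1:]" and eb="[:1,1,1,1,1,1,1:] ^ 3"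
     and Kz="[:-1, 0, 14, -10, 17, -11, 16, -11, 1, -7, -4, 3, -9, 5, -7, 8, -4, 2, -3, 1, 1:]" and Qx="[:-1, 5, -4, 8, -2, 3, 3, 0, 1, -2, 3, -8, 5, -7, -1, 0, -2, 0, -2, 4, -6, 7, -4, 0, 1:]" and Qy="[:-2, 3, -4, 5, -3, 3, -3, 1, 1:]"])
  subgoal using assms by simp
  subgoal by (rule poly_eq_poly_eq_iff[THEN iffD1], rule ext, simp, algebra)
  subgoal by (rule poly_eq_poly_eq_iff[THEN iffD1], rule ext, simp, algebra)
  apply (rule tail_i_1_a)
  apply (rule tail_i_1_b)
  subgoal by simp
  subgoal by (simp only: Nk_mult Nk_power Nk_1 N2_neg1 N3_neg1 N2_c2 N2_c4 N2_c5 N2_c7 N3_c2 N3_c4 N3_c5 N3_c7; simp?)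
  subgoal by (rule N1_x)
  subgoal by (simp only: Nk_mult Nk_power Nk_1 N2_neg1 N3_neg1 N2_c2 N2_c4 N2_c5 N2_c7 N3_c2 N3_c4 N3_c5 N3_c7; simp?)
  done

lemma tail_i_c7_a: "[:1,-1::int:] * [:1,1,1,1,1,1,1:] * ([:3:] * [:-1,1:] ^ 5) + [:1,0,0,1,0,0,1:] * [:6, -17, 28, -33, 30, -27, 21, -12, 12, -15, 10, -2, 0, 0, -6, 9, -6, 6, -6, 4, -2:] = [:-1,1:] * [:1,1,1:] * [:1,0,0,0,0,0,0,0,0,1,0,0,0,0,0,0,0,0,1:] * [:-3, 2, 2, -6, 4, -2:]"
  by (rule poly_eq_poly_eq_iff[THEN iffD1], rule ext, simp, algebra)

lemma tail_i_c7_b: "[:1,-1::int:] * [:1,1,1,1,1,1,1:] * [:-1,1:] ^ 8 + [:1,0,0,1,0,0,1:] * [:-10, 15, -33, 66, -80, 82, -75, 62, -46, 28, -31, 29, -9, 2, 2, -9, 17, -19, 9, -12, 12:] = [:-1,1:] * [:1,1,1:] * [:1,0,0,0,0,0,0,0,0,1,0,0,0,0,0,0,0,0,1:] * [:9, -7, 5, 9, -12, 12:]"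
  by (rule poly_eq_poly_eq_iff[THEN iffD1], rule ext, simp, algebra)

lemma case_i_101:
  fixes h \<alpha> \<beta> :: "int poly" and r0 r1 r2 :: int
  assumes hd: "h = [:r0:] + [:-1,1:] * [:r1:] + [:-1,1:] ^ 2 * [:r2:] + [:3:] * \<alpha> + [:-1,1:] ^ 3 * \<beta>"
    and "r0 = 1" "r1 = 0" "r2 = 1"
  shows "\<exists>F. poly F 1 = 3 \<and> Nk 1 F = 3 \<and> Nk 3 F = 3 \<and> Nk 2 F = 3 * Nk 2 (1 + [:-1,1:] ^ 5 * h) \<and> M27 F = 81 * Nk 2 (1 + [:-1,1:] ^ 5 * h)"
  apply (rule gen_i[where \<rho>="[:1:] + [:-1,1:] * [:0:] + [:-1,1:] ^ 2 * [:1:]" and \<alpha>=\<alpha> and \<beta>=\<beta> and u="[:1,1,1,1,1,1,1:]" and ea="[:0, 1:]" and eb="[:1,1,1,1,1,1,1:] * [:1,1,1,1,1,1,1:] ^ 3"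
     and Kz="[:7, -13, 37, -40, 65, -32, 61, -14, 34, -16, 16, -24, -14, -19, -21, -3, -20, 6, -10, 7, -6:]" and Qx="[:6, -8, 9, 11, -8, 24, 5, 11, 11, 14, -3, 7, 5, -22, 5, -16, -12, -11, -4, -17, 0, 4, -17, 13, -6:]" and Qy="[:5, -4, 0, 2, -3, 6, -7, 8, -6:]"])
  subgoal using assms by simp
  subgoal by (rule poly_eq_poly_eq_iff[THEN iffD1], rule ext, simp, algebra)
  subgoal by (rule poly_eq_poly_eq_iff[THEN iffD1], rule ext, simp, algebra)
  apply (rule tail_i_c7_a)
  apply (rule tail_i_c7_b)
  subgoal by simp
  subgoal by (simp only: Nk_mult Nk_power Nk_1 N2_neg1 N3_neg1 N2_c2 N2_c4 N2_c5 N2_c7 N3_c2 N3_c4 N3_c5 N3_c7; simp?)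
  subgoal by (rule N1_x)
  subgoal by (simp only: Nk_mult Nk_power Nk_1 N2_neg1 N3_neg1 N2_c2 N2_c4 N2_c5 N2_c7 N3_c2 N3_c4 N3_c5 N3_c7; simp?)
  done

lemma tail_i_c4_a: "[:1,-1::int:] * [:1,1,1,1:] * ([:3:] * [:-1,1:] ^ 5) + [:1,0,0,1,0,0,1:] * [:-5, -7, 23, -21, 18, -12, 0, 12, -18, 16, -22, 23, -12, 9, -6, 0, 6, -9, 4, -7, 8:] = [:-1,1:] * [:1,1,1:] * [:1,0,0,0,0,0,0,0,0,1,0,0,0,0,0,0,0,0,1:] * [:8, -8, 7, 4, -7, 8:]"
  by (rule poly_eq_poly_eq_iff[THEN iffD1], rule ext, simp, algebra)

lemma tail_i_c4_b: "[:1,-1::int:] * [:1,1,1,1:] * [:-1,1:] ^ 8 + [:1,0,0,1,0,0,1:] * [:18, -13, -7, 19, -42, 48, -37, 14, 14, -19, 35, -49, 38, -35, 28, -19, 7, 7, 0, 7, -14:] = [:-1,1:] * [:1,1,1:] * [:1,0,0,0,0,0,0,0,0,1,0,0,0,0,0,0,0,0,1:] * [:-19, 21, -21, 0, 7, -14:]"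
  by (rule poly_eq_poly_eq_iff[THEN iffD1], rule ext, simp, algebra)

lemma case_i_102:
  fixes h \<alpha> \<beta> :: "int poly" and r0 r1 r2 :: int
  assumes hd: "h = [:r0:] + [:-1,1:] * [:r1:] + [:-1,1:] ^ 2 * [:r2:] + [:3:] * \<alpha> + [:-1,1:] ^ 3 * \<beta>"
    and "r0 = 1" "r1 = 0" "r2 = 2"
  shows "\<exists>F. poly F 1 = 3 \<and> Nk 1 F = 3 \<and> Nk 3 F = 3 \<and> Nk 2 F = 3 * Nk 2 (1 + [:-1,1:] ^ 5 * h) \<and> M27 F = 81 * Nk 2 (1 + [:-1,1:] ^ 5 * h)"
  apply (rule gen_i[where \<rho>="[:1:] + [:-1,1:] * [:0:] + [:-1,1:] ^ 2 * [:2:]" and \<alpha>=\<alpha> and \<beta>=\<beta> and u="[:1,1,1,1:]" and ea="[:0, 1:]" and eb="[:1,1,1,1:] * [:1,1,1,1,1,1,1:] ^ 3"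
     and Kz="[:-21, 8, 35, -30, 69, -37, 40, 11, -33, 25, -62, 49, -54, 25, -33, 11, 2, -15, 5, -13, 19:]" and Qx="[:-23, 49, -42, 22, 24, -24, 27, 7, 6, -21, 47, -49, 13, 10, -40, 12, -7, -4, -27, 45, -47, 18, 18, -32, 19:]" and Qy="[:-24, 24, -23, 19, -10, 4, 5, -13, 19:]"])
  subgoal using assms by simp
  subgoal by (rule poly_eq_poly_eq_iff[THEN iffD1], rule ext, simp, algebra)
  subgoal by (rule poly_eq_poly_eq_iff[THEN iffD1], rule ext, simp, algebra)
  apply (rule tail_i_c4_a)
  apply (rule tail_i_c4_b)
  subgoal by simp
  subgoal by (simp only: Nk_mult Nk_power Nk_1 N2_neg1 N3_neg1 N2_c2 N2_c4 N2_c5 N2_c7 N3_c2 N3_c4 N3_c5 N3_c7; simp?)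
  subgoal by (rule N1_x)
  subgoal by (simp only: Nk_mult Nk_power Nk_1 N2_neg1 N3_neg1 N2_c2 N2_c4 N2_c5 N2_c7 N3_c2 N3_c4 N3_c5 N3_c7; simp?)
  done

lemma case_i_110:
  fixes h \<alpha> \<beta> :: "int poly" and r0 r1 r2 :: int
  assumes hd: "h = [:r0:] + [:-1,1:] * [:r1:] + [:-1,1:] ^ 2 * [:r2:] + [:3:] * \<alpha> + [:-1,1:] ^ 3 * \<beta>"
    and "r0 = 1" "r1 = 1" "r2 = 0"
  shows "\<exists>F. poly F 1 = 3 \<and> Nk 1 F = 3 \<and> Nk 3 F = 3 \<and> Nk 2 F = 3 * Nk 2 (1 + [:-1,1:] ^ 5 * h) \<and> M27 F = 81 * Nk 2 (1 + [:-1,1:] ^ 5 * h)"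
  apply (rule gen_i[where \<rho>="[:1:] + [:-1,1:] * [:1:] + [:-1,1:] ^ 2 * [:0:]" and \<alpha>=\<alpha> and \<beta>=\<beta> and u="1" and ea="[:0, 1:]" and eb="1"
     and Kz="[:1, -1, -3, 10, -14, 14, -14, 14, -10, 5, -2, -1, 5, -7, 7, -7, 7, -5, 3, -2, 1:]" and Qx="[:2, -6, 8, -6, 3, -1, 1, -2, 2, 1, -5, 7, -6, 4, -2, 1, -1, 1, 1, -4, 6, -6, 5, -3, 1:]" and Qy="[:1, -2, 3, -4, 5, -4, 3, -2, 1:]"])
  subgoal using assms by simp
  subgoal by (rule poly_eq_poly_eq_iff[THEN iffD1], rule ext, simp, algebra)
  subgoal by (rule poly_eq_poly_eq_iff[THEN iffD1], rule ext, simp, algebra)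
  apply (rule tail_i_1_a)
  apply (rule tail_i_1_b)
  subgoal by simp
  subgoal by (simp only: Nk_mult Nk_power Nk_1 N2_neg1 N3_neg1 N2_c2 N2_c4 N2_c5 N2_c7 N3_c2 N3_c4 N3_c5 N3_c7; simp?)
  subgoal by (rule N1_x)
  subgoal by (simp only: Nk_mult Nk_power Nk_1 N2_neg1 N3_neg1 N2_c2 N2_c4 N2_c5 N2_c7 N3_c2 N3_c4 N3_c5 N3_c7; simp?)
  done

lemma case_i_111:
  fixes h \<alpha> \<beta> :: "int poly" and r0 r1 r2 :: int
  assumes hd: "h = [:r0:] + [:-1,1:] * [:r1:] + [:-1,1:] ^ 2 * [:r2:] + [:3:] * \<alpha> + [:-1,1:] ^ 3 * \<beta>"
    and "r0 = 1" "r1 = 1" "r2 = 1"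
  shows "\<exists>F. poly F 1 = 3 \<and> Nk 1 F = 3 \<and> Nk 3 F = 3 \<and> Nk 2 F = 3 * Nk 2 (1 + [:-1,1:] ^ 5 * h) \<and> M27 F = 81 * Nk 2 (1 + [:-1,1:] ^ 5 * h)"
  apply (rule gen_i[where \<rho>="[:1:] + [:-1,1:] * [:1:] + [:-1,1:] ^ 2 * [:1:]" and \<alpha>=\<alpha> and \<beta>=\<beta> and u="[:1,1,1,1,1,1,1:]" and ea="[:0, 1:]" and eb="[:1,1,1,1,1,1,1:]"
     and Kz="[:4, -8, 17, -28, 31, -30, 26, -20, 15, -11, 12, -9, 2, 0, -2, 5, -7, 7, -4, 5, -4:]" and Qx="[:4, -7, 5, 3, -10, 10, -4, -2, 2, 3, -7, 5, 3, -10, 10, -4, -1, 1, 3, -6, 4, 3, -9, 9, -4:]" and Qy="[:3, -2, 1, 1, -2, 3, -4, 5, -4:]"])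
  subgoal using assms by simp
  subgoal by (rule poly_eq_poly_eq_iff[THEN iffD1], rule ext, simp, algebra)
  subgoal by (rule poly_eq_poly_eq_iff[THEN iffD1], rule ext, simp, algebra)
  apply (rule tail_i_c7_a)
  apply (rule tail_i_c7_b)
  subgoal by simp
  subgoal by (simp only: Nk_mult Nk_power Nk_1 N2_neg1 N3_neg1 N2_c2 N2_c4 N2_c5 N2_c7 N3_c2 N3_c4 N3_c5 N3_c7; simp?)
  subgoal by (rule N1_x)
  subgoal by (simp only: Nk_mult Nk_power Nk_1 N2_neg1 N3_neg1 N2_c2 N2_c4 N2_c5 N2_c7 N3_c2 N3_c4 N3_c5 N3_c7; simp?)
  done

lemma case_i_112:
  fixes h \<alpha> \<beta> :: "int poly" and r0 r1 r2 :: int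
  assumes hd: "h = [:r0:] + [:-1,1:] * [:r1:] + [:-1,1:] ^ 2 * [:r2:] + [:3:] * \<alpha> + [:-1,1:] ^ 3 * \<beta>"
    and "r0 = 1" "r1 = 1" "r2 = 2"
  shows "\<exists>F. poly F 1 = 3 \<and> Nk 1 F = 3 \<and> Nk 3 F = 3 \<and> Nk 2 F = 3 * Nk 2 (1 + [:-1,1:] ^ 5 * h) \<and> M27 F = 81 * Nk 2 (1 + [:-1,1:] ^ 5 * h)"
  apply (rule gen_i[where \<rho>="[:1:] + [:-1,1:] * [:1:] + [:-1,1:] ^ 2 * [:2:]" and \<alpha>=\<alpha> and \<beta>=\<beta> and u="[:1,1,1,1:]" and ea="[:0, 1:]" and eb="[:1,1,1,1:]"
     and Kz="[:-16, 6, 19, -29, 43, -40, 24, 0, -24, 24, -37, 48, -33, 28, -21, 12, 0, -12, 3, -9, 15:]" and Qx="[:-17, 35, -35, 15, 10, -22, 15, -2, 2, -18, 35, -35, 15, 11, -23, 15, -1, 1, -18, 36, -36, 15, 12, -24, 15:]" and Qy="[:-18, 19, -18, 15, -9, 3, 3, -9, 15:]"])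
  subgoal using assms by simp
  subgoal by (rule poly_eq_poly_eq_iff[THEN iffD1], rule ext, simp, algebra)
  subgoal by (rule poly_eq_poly_eq_iff[THEN iffD1], rule ext, simp, algebra)
  apply (rule tail_i_c4_a)
  apply (rule tail_i_c4_b)
  subgoal by simp
  subgoal by (simp only: Nk_mult Nk_power Nk_1 N2_neg1 N3_neg1 N2_c2 N2_c4 N2_c5 N2_c7 N3_c2 N3_c4 N3_c5 N3_c7; simp?)
  subgoal by (rule N1_x)
  subgoal by (simp only: Nk_mult Nk_power Nk_1 N2_neg1 N3_neg1 N2_c2 N2_c4 N2_c5 N2_c7 N3_c2 N3_c4 N3_c5 N3_c7; simp?)
  done

lemma case_i_120:
  fixes h \<alpha> \<beta> :: "int poly" and r0 r1 r2 :: int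
  assumes hd: "h = [:r0:] + [:-1,1:] * [:r1:] + [:-1,1:] ^ 2 * [:r2:] + [:3:] * \<alpha> + [:-1,1:] ^ 3 * \<beta>"
    and "r0 = 1" "r1 = 2" "r2 = 0"
  shows "\<exists>F. poly F 1 = 3 \<and> Nk 1 F = 3 \<and> Nk 3 F = 3 \<and> Nk 2 F = 3 * Nk 2 (1 + [:-1,1:] ^ 5 * h) \<and> M27 F = 81 * Nk 2 (1 + [:-1,1:] ^ 5 * h)"
  apply (rule gen_i[where \<rho>="[:1:] + [:-1,1:] * [:2:] + [:-1,1:] ^ 2 * [:0:]" and \<alpha>=\<alpha> and \<beta>=\<beta> and u="1" and ea="[:0, 1:]" and eb="[:1,1,1,1:] ^ 3"
     and Kz="[:4, 3, -15, 36, -43, 40, -46, 34, -26, 13, 0, -5, 19, -21, 20, -23, 17, -13, 9, -4, 2:]" and Qx="[:6, -13, 20, -17, 12, -6, 1, -3, 1, 5, -15, 19, -18, 12, -5, 2, -1, 1, 5, -14, 18, -18, 13, -6, 2:]" and Qy="[:5, -8, 9, -14, 13, -11, 9, -4, 2:]"])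
  subgoal using assms by simp
  subgoal by (rule poly_eq_poly_eq_iff[THEN iffD1], rule ext, simp, algebra)
  subgoal by (rule poly_eq_poly_eq_iff[THEN iffD1], rule ext, simp, algebra)
  apply (rule tail_i_1_a)
  apply (rule tail_i_1_b)
  subgoal by simp
  subgoal by (simp only: Nk_mult Nk_power Nk_1 N2_neg1 N3_neg1 N2_c2 N2_c4 N2_c5 N2_c7 N3_c2 N3_c4 N3_c5 N3_c7; simp?)
  subgoal by (rule N1_x)
  subgoal by (simp only: Nk_mult Nk_power Nk_1 N2_neg1 N3_neg1 N2_c2 N2_c4 N2_c5 N2_c7 N3_c2 N3_c4 N3_c5 N3_c7; simp?)
  done

lemma case_i_121:
  fixes h \<alpha> \<beta> :: "int poly" and r0 r1 r2 :: int
  assumes hd: "h = [:r0:] + [:-1,1:] * [:r1:] + [:-1,1:] ^ 2 * [:r2:] + [:3:] * \<alpha> + [:-1,1:] ^ 3 * \<beta>"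
    and "r0 = 1" "r1 = 2" "r2 = 1"
  shows "\<exists>F. poly F 1 = 3 \<and> Nk 1 F = 3 \<and> Nk 3 F = 3 \<and> Nk 2 F = 3 * Nk 2 (1 + [:-1,1:] ^ 5 * h) \<and> M27 F = 81 * Nk 2 (1 + [:-1,1:] ^ 5 * h)"
  apply (rule gen_i[where \<rho>="[:1:] + [:-1,1:] * [:2:] + [:-1,1:] ^ 2 * [:1:]" and \<alpha>=\<alpha> and \<beta>=\<beta> and u="[:1,1,1,1,1,1,1:]" and ea="[:0, 1:]" and eb="[:1,1,1,1,1,1,1:] * [:1,1,1,1:] ^ 3"
     and Kz="[:3, 5, 10, 2, 16, -9, 7, -16, -3, -12, -3, -7, 3, 3, 4, 3, -1, 1, -3, 0, -2:]" and Qx="[:4, 0, 6, 4, 1, 6, 0, -1, -1, 0, -7, -2, -3, -6, 2, -2, -1, 1, 3, -2, 2, 0, -3, 2, -2:]" and Qy="[:3, 2, 3, 0, -1, -1, -3, 0, -2:]"])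
  subgoal using assms by simp
  subgoal by (rule poly_eq_poly_eq_iff[THEN iffD1], rule ext, simp, algebra)
  subgoal by (rule poly_eq_poly_eq_iff[THEN iffD1], rule ext, simp, algebra)
  apply (rule tail_i_c7_a)
  apply (rule tail_i_c7_b)
  subgoal by simp
  subgoal by (simp only: Nk_mult Nk_power Nk_1 N2_neg1 N3_neg1 N2_c2 N2_c4 N2_c5 N2_c7 N3_c2 N3_c4 N3_c5 N3_c7; simp?)
  subgoal by (rule N1_x)
  subgoal by (simp only: Nk_mult Nk_power Nk_1 N2_neg1 N3_neg1 N2_c2 N2_c4 N2_c5 N2_c7 N3_c2 N3_c4 N3_c5 N3_c7; simp?)
  done

lemma case_i_122:
  fixes h \<alpha> \<beta> :: "int poly" and r0 r1 r2 :: int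
  assumes hd: "h = [:r0:] + [:-1,1:] * [:r1:] + [:-1,1:] ^ 2 * [:r2:] + [:3:] * \<alpha> + [:-1,1:] ^ 3 * \<beta>"
    and "r0 = 1" "r1 = 2" "r2 = 2"
  shows "\<exists>F. poly F 1 = 3 \<and> Nk 1 F = 3 \<and> Nk 3 F = 3 \<and> Nk 2 F = 3 * Nk 2 (1 + [:-1,1:] ^ 5 * h) \<and> M27 F = 81 * Nk 2 (1 + [:-1,1:] ^ 5 * h)"
  apply (rule gen_i[where \<rho>="[:1:] + [:-1,1:] * [:2:] + [:-1,1:] ^ 2 * [:2:]" and \<alpha>=\<alpha> and \<beta>=\<beta> and u="[:1,1,1,1:]" and ea="[:0, 1:]" and eb="[:1,1,1,1:] * [:1,1,1,1:] ^ 3"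
     and Kz="[:-8, 12, 15, -13, 33, -30, 15, -15, -26, 9, -24, 39, -18, 27, -13, 9, -7, -13, 0, -4, 13:]" and Qx="[:-8, 26, -24, 17, 7, -15, 12, -5, -3, -12, 21, -28, 13, 3, -16, 13, -1, 1, -9, 24, -28, 13, 4, -17, 13:]" and Qy="[:-9, 16, -13, 9, -11, 0, 0, -4, 13:]"])
  subgoal using assms by simp
  subgoal by (rule poly_eq_poly_eq_iff[THEN iffD1], rule ext, simp, algebra)
  subgoal by (rule poly_eq_poly_eq_iff[THEN iffD1], rule ext, simp, algebra)
  apply (rule tail_i_c4_a)
  apply (rule tail_i_c4_b)
  subgoal by simp
  subgoal by (simp only: Nk_mult Nk_power Nk_1 N2_neg1 N3_neg1 N2_c2 N2_c4 N2_c5 N2_c7 N3_c2 N3_c4 N3_c5 N3_c7; simp?)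
  subgoal by (rule N1_x)
  subgoal by (simp only: Nk_mult Nk_power Nk_1 N2_neg1 N3_neg1 N2_c2 N2_c4 N2_c5 N2_c7 N3_c2 N3_c4 N3_c5 N3_c7; simp?)
  done

lemma tail_i_m1_a: "[:1,-1::int:] * (-1) * ([:3:] * [:-1,1:] ^ 5) + [:1,0,0,1,0,0,1:] * [:4, 9, -33, 42, -42, 42, -42, 30, -12, 7, 3, -18, 21, -21, 21, -21, 15, -6, 7, -3, -3:] = [:-1,1:] * [:1,1,1:] * [:1,0,0,0,0,0,0,0,0,1,0,0,0,0,0,0,0,0,1:] * [:-7, 9, -12, 7, -3, -3:]"
  by (rule poly_eq_poly_eq_iff[THEN iffD1], rule ext, simp, algebra)

lemma tail_i_m1_b: "[:1,-1::int:] * (-1) * [:-1,1:] ^ 8 + [:1,0,0,1,0,0,1:] * [:1, 3, 15, -57, 90, -108, 112, -108, 90, -56, 30, -3, -28, 45, -54, 56, -54, 45, -28, 21, -12:] = [:-1,1:] * [:1,1,1:] * [:1,0,0,0,0,0,0,0,0,1,0,0,0,0,0,0,0,0,1:] * [:0, -12, 21, -28, 21, -12:]"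
  by (rule poly_eq_poly_eq_iff[THEN iffD1], rule ext, simp, algebra)

lemma case_i_200:
  fixes h \<alpha> \<beta> :: "int poly" and r0 r1 r2 :: int
  assumes hd: "h = [:r0:] + [:-1,1:] * [:r1:] + [:-1,1:] ^ 2 * [:r2:] + [:3:] * \<alpha> + [:-1,1:] ^ 3 * \<beta>"
    and "r0 = 2" "r1 = 0" "r2 = 0"
  shows "\<exists>F. poly F 1 = 3 \<and> Nk 1 F = 3 \<and> Nk 3 F = 3 \<and> Nk 2 F = 3 * Nk 2 (1 + [:-1,1:] ^ 5 * h) \<and> M27 F = 81 * Nk 2 (1 + [:-1,1:] ^ 5 * h)"
  apply (rule gen_i[where \<rho>="[:2:] + [:-1,1:] * [:0:] + [:-1,1:] ^ 2 * [:0:]" and \<alpha>=\<alpha> and \<beta>=\<beta> and u="(-1)" and ea="[:0, 0, -1:]" and eb="(-1)"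
     and Kz="[:3, 6, -22, 28, -28, 28, -28, 20, -8, 5, 2, -12, 14, -14, 14, -14, 10, -4, 5, -2, -2:]" and Qx="[:4, -9, 14, -15, 9, 0, -4, 2, 0, 3, -9, 14, -14, 8, 0, -3, 1, 0, 4, -10, 14, -13, 7, 0, -2:]" and Qy="[:5, -6, 8, -9, 8, -6, 5, -2, -2:]"])
  subgoal using assms by simp
  subgoal by (rule poly_eq_poly_eq_iff[THEN iffD1], rule ext, simp, algebra)
  subgoal by (rule poly_eq_poly_eq_iff[THEN iffD1], rule ext, simp, algebra)
  apply (rule tail_i_m1_a)
  apply (rule tail_i_m1_b)
  subgoal by simp
  subgoal by (simp only: Nk_mult Nk_power Nk_1 N2_neg1 N3_neg1 N2_c2 N2_c4 N2_c5 N2_c7 N3_c2 N3_c4 N3_c5 N3_c7; simp?)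
  subgoal by (rule N1_mx2)
  subgoal by (simp only: Nk_mult Nk_power Nk_1 N2_neg1 N3_neg1 N2_c2 N2_c4 N2_c5 N2_c7 N3_c2 N3_c4 N3_c5 N3_c7; simp?)
  done

lemma tail_i_c5_a: "[:1,-1::int:] * [:1,1,1,1,1:] * ([:3:] * [:-1,1:] ^ 5) + [:1,0,0,1,0,0,1:] * [:4, -14, 26, -27, 21, -24, 30, -30, 24, -17, 13, -4, -6, 9, -12, 15, -15, 12, -8, 7, -4:] = [:-1,1:] * [:1,1,1:] * [:1,0,0,0,0,0,0,0,0,1,0,0,0,0,0,0,0,0,1:] * [:-1, -1, 4, -8, 7, -4:]"
  by (rule poly_eq_poly_eq_iff[THEN iffD1], rule ext, simp, algebra)

lemma tail_i_c5_b: "[:1,-1::int:] * [:1,1,1,1,1:] * [:-1,1:] ^ 8 + [:1,0,0,1,0,0,1:] * [:-15, 15, -28, 64, -71, 66, -64, 71, -76, 56, -49, 38, -7, -7, 19, -28, 35, -38, 21, -21, 19:] = [:-1,1:] * [:1,1,1:] * [:1,0,0,0,0,0,0,0,0,1,0,0,0,0,0,0,0,0,1:] * [:14, -7, 0, 21, -21, 19:]"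
  by (rule poly_eq_poly_eq_iff[THEN iffD1], rule ext, simp, algebra)

lemma case_i_201:
  fixes h \<alpha> \<beta> :: "int poly" and r0 r1 r2 :: int
  assumes hd: "h = [:r0:] + [:-1,1:] * [:r1:] + [:-1,1:] ^ 2 * [:r2:] + [:3:] * \<alpha> + [:-1,1:] ^ 3 * \<beta>"
    and "r0 = 2" "r1 = 0" "r2 = 1"
  shows "\<exists>F. poly F 1 = 3 \<and> Nk 1 F = 3 \<and> Nk 3 F = 3 \<and> Nk 2 F = 3 * Nk 2 (1 + [:-1,1:] ^ 5 * h) \<and> M27 F = 81 * Nk 2 (1 + [:-1,1:] ^ 5 * h)"
  apply (rule gen_i[where \<rho>="[:2:] + [:-1,1:] * [:0:] + [:-1,1:] ^ 2 * [:1:]" and \<alpha>=\<alpha> and \<beta>=\<beta> and u="[:1,1,1,1,1:]" and ea="[:0, -1:]" and eb="[:1,1,1,1,1:]"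
     and Kz="[:9, -18, 37, -54, 49, -47, 53, -58, 54, -38, 31, -18, -4, 13, -20, 26, -29, 27, -16, 15, -11:]" and Qx="[:7, -7, -5, 22, -31, 24, -9, 0, -2, 8, -7, -5, 22, -31, 25, -10, 0, -1, 7, -7, -4, 21, -31, 26, -11:]" and Qy="[:6, -1, -4, 10, -14, 16, -16, 15, -11:]"])
  subgoal using assms by simp
  subgoal by (rule poly_eq_poly_eq_iff[THEN iffD1], rule ext, simp, algebra)
  subgoal by (rule poly_eq_poly_eq_iff[THEN iffD1], rule ext, simp, algebra)
  apply (rule tail_i_c5_a)
  apply (rule tail_i_c5_b)
  subgoal by simp
  subgoal by (simp only: Nk_mult Nk_power Nk_1 N2_neg1 N3_neg1 N2_c2 N2_c4 N2_c5 N2_c7 N3_c2 N3_c4 N3_c5 N3_c7; simp?)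
  subgoal by (rule N1_mx)
  subgoal by (simp only: Nk_mult Nk_power Nk_1 N2_neg1 N3_neg1 N2_c2 N2_c4 N2_c5 N2_c7 N3_c2 N3_c4 N3_c5 N3_c7; simp?)
  done

lemma tail_i_c2_a: "[:1,-1::int:] * [:1,1:] * ([:3:] * [:-1,1:] ^ 5) + [:1,0,0,1,0,0,1:] * [:-1, -13, 24, -12, 0, 0, 0, 12, -18, 8, -10, 15, -6, 0, 0, 0, 6, -9, 2, -4, 6:] = [:-1,1:] * [:1,1,1:] * [:1,0,0,0,0,0,0,0,0,1,0,0,0,0,0,0,0,0,1:] * [:4, -2, 3, 2, -4, 6:]"
  by (rule poly_eq_poly_eq_iff[THEN iffD1], rule ext, simp, algebra)

lemma tail_i_c2_b: "[:1,-1::int:] * [:1,1:] * [:-1,1:] ^ 8 + [:1,0,0,1,0,0,1:] * [:11, -4, -18, 30, -33, 18, -4, -4, 18, -22, 26, -27, 19, -17, 9, -2, -2, 9, -5, 7, -9:] = [:-1,1:] * [:1,1,1:] * [:1,0,0,0,0,0,0,0,0,1,0,0,0,0,0,0,0,0,1:] * [:-12, 12, -9, -5, 7, -9:]"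
  by (rule poly_eq_poly_eq_iff[THEN iffD1], rule ext, simp, algebra)

lemma case_i_202:
  fixes h \<alpha> \<beta> :: "int poly" and r0 r1 r2 :: int
  assumes hd: "h = [:r0:] + [:-1,1:] * [:r1:] + [:-1,1:] ^ 2 * [:r2:] + [:3:] * \<alpha> + [:-1,1:] ^ 3 * \<beta>"
    and "r0 = 2" "r1 = 0" "r2 = 2"
  shows "\<exists>F. poly F 1 = 3 \<and> Nk 1 F = 3 \<and> Nk 3 F = 3 \<and> Nk 2 F = 3 * Nk 2 (1 + [:-1,1:] ^ 5 * h) \<and> M27 F = 81 * Nk 2 (1 + [:-1,1:] ^ 5 * h)"
  apply (rule gen_i[where \<rho>="[:2:] + [:-1,1:] * [:0:] + [:-1,1:] ^ 2 * [:2:]" and \<alpha>=\<alpha> and \<beta>=\<beta> and u="[:1,1:]" and ea="[:0, -1:]" and eb="[:1,1:]"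
     and Kz="[:-12, -12, 49, -46, 28, -8, 0, 16, -40, 32, -32, 39, -24, 14, -4, 0, 8, -20, 8, -10, 15:]" and Qx="[:-15, 28, -24, 4, 18, -27, 17, 0, -2, -14, 28, -23, 3, 18, -26, 16, 0, -1, -15, 28, -22, 2, 18, -25, 15:]" and Qy="[:-16, 12, -9, 8, -2, -5, 8, -10, 15:]"])
  subgoal using assms by simp
  subgoal by (rule poly_eq_poly_eq_iff[THEN iffD1], rule ext, simp, algebra)
  subgoal by (rule poly_eq_poly_eq_iff[THEN iffD1], rule ext, simp, algebra)
  apply (rule tail_i_c2_a)
  apply (rule tail_i_c2_b)
  subgoal by simp
  subgoal by (simp only: Nk_mult Nk_power Nk_1 N2_neg1 N3_neg1 N2_c2 N2_c4 N2_c5 N2_c7 N3_c2 N3_c4 N3_c5 N3_c7; simp?)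
  subgoal by (rule N1_mx)
  subgoal by (simp only: Nk_mult Nk_power Nk_1 N2_neg1 N3_neg1 N2_c2 N2_c4 N2_c5 N2_c7 N3_c2 N3_c4 N3_c5 N3_c7; simp?)
  done

lemma case_i_210:
  fixes h \<alpha> \<beta> :: "int poly" and r0 r1 r2 :: int
  assumes hd: "h = [:r0:] + [:-1,1:] * [:r1:] + [:-1,1:] ^ 2 * [:r2:] + [:3:] * \<alpha> + [:-1,1:] ^ 3 * \<beta>"
    and "r0 = 2" "r1 = 1" "r2 = 0"
  shows "\<exists>F. poly F 1 = 3 \<and> Nk 1 F = 3 \<and> Nk 3 F = 3 \<and> Nk 2 F = 3 * Nk 2 (1 + [:-1,1:] ^ 5 * h) \<and> M27 F = 81 * Nk 2 (1 + [:-1,1:] ^ 5 * h)"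
  apply (rule gen_i[where \<rho>="[:2:] + [:-1,1:] * [:1:] + [:-1,1:] ^ 2 * [:0:]" and \<alpha>=\<alpha> and \<beta>=\<beta> and u="(-1)" and ea="[:0, 0, -1:]" and eb="(-1) * [:1,1,1,1:] ^ 3"
     and Kz="[:0, 2, -10, 2, 1, 2, 4, 0, 8, -3, 0, -8, 0, 0, 1, 2, 0, 4, -1, 0, -3:]" and Qx="[:0, -2, 2, -4, 0, 5, -4, 3, 1, -1, 1, 2, -2, 0, 3, -4, 1, 0, 0, 0, 2, -1, -1, 3, -3:]" and Qy="[:1, 0, 2, 1, 0, 1, -1, 0, -3:]"])
  subgoal using assms by simp
  subgoal by (rule poly_eq_poly_eq_iff[THEN iffD1], rule ext, simp, algebra)
  subgoal by (rule poly_eq_poly_eq_iff[THEN iffD1], rule ext, simp, algebra)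
  apply (rule tail_i_m1_a)
  apply (rule tail_i_m1_b)
  subgoal by simp
  subgoal by (simp only: Nk_mult Nk_power Nk_1 N2_neg1 N3_neg1 N2_c2 N2_c4 N2_c5 N2_c7 N3_c2 N3_c4 N3_c5 N3_c7; simp?)
  subgoal by (rule N1_mx2)
  subgoal by (simp only: Nk_mult Nk_power Nk_1 N2_neg1 N3_neg1 N2_c2 N2_c4 N2_c5 N2_c7 N3_c2 N3_c4 N3_c5 N3_c7; simp?)
  done

lemma case_i_211:
  fixes h \<alpha> \<beta> :: "int poly" and r0 r1 r2 :: int
  assumes hd: "h = [:r0:] + [:-1,1:] * [:r1:] + [:-1,1:] ^ 2 * [:r2:] + [:3:] * \<alpha> + [:-1,1:] ^ 3 * \<beta>"
    and "r0 = 2" "r1 = 1" "r2 = 1"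
  shows "\<exists>F. poly F 1 = 3 \<and> Nk 1 F = 3 \<and> Nk 3 F = 3 \<and> Nk 2 F = 3 * Nk 2 (1 + [:-1,1:] ^ 5 * h) \<and> M27 F = 81 * Nk 2 (1 + [:-1,1:] ^ 5 * h)"
  apply (rule gen_i[where \<rho>="[:2:] + [:-1,1:] * [:1:] + [:-1,1:] ^ 2 * [:1:]" and \<alpha>=\<alpha> and \<beta>=\<beta> and u="[:1,1,1,1,1:]" and ea="[:0, -1:]" and eb="[:1,1,1,1,1:] * [:1,1,1,1:] ^ 3"
     and Kz="[:10, -6, 31, -30, 36, -31, 31, -47, 23, -34, 18, -9, 3, 14, -8, 18, -22, 12, -13, 10, -5:]" and Qx="[:9, -3, -2, 20, -18, 16, -4, -2, -6, 5, -9, -7, 15, -23, 14, -4, 0, -1, 9, -6, -4, 15, -23, 15, -5:]" and Qy="[:8, 2, -1, 5, -12, 7, -13, 10, -5:]"])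
  subgoal using assms by simp
  subgoal by (rule poly_eq_poly_eq_iff[THEN iffD1], rule ext, simp, algebra)
  subgoal by (rule poly_eq_poly_eq_iff[THEN iffD1], rule ext, simp, algebra)
  apply (rule tail_i_c5_a)
  apply (rule tail_i_c5_b)
  subgoal by simp
  subgoal by (simp only: Nk_mult Nk_power Nk_1 N2_neg1 N3_neg1 N2_c2 N2_c4 N2_c5 N2_c7 N3_c2 N3_c4 N3_c5 N3_c7; simp?)
  subgoal by (rule N1_mx)
  subgoal by (simp only: Nk_mult Nk_power Nk_1 N2_neg1 N3_neg1 N2_c2 N2_c4 N2_c5 N2_c7 N3_c2 N3_c4 N3_c5 N3_c7; simp?)
  done

lemma case_i_212:
  fixes h \<alpha> \<beta> :: "int poly" and r0 r1 r2 :: int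
  assumes hd: "h = [:r0:] + [:-1,1:] * [:r1:] + [:-1,1:] ^ 2 * [:r2:] + [:3:] * \<alpha> + [:-1,1:] ^ 3 * \<beta>"
    and "r0 = 2" "r1 = 1" "r2 = 2"
  shows "\<exists>F. poly F 1 = 3 \<and> Nk 1 F = 3 \<and> Nk 3 F = 3 \<and> Nk 2 F = 3 * Nk 2 (1 + [:-1,1:] ^ 5 * h) \<and> M27 F = 81 * Nk 2 (1 + [:-1,1:] ^ 5 * h)"
  apply (rule gen_i[where \<rho>="[:2:] + [:-1,1:] * [:1:] + [:-1,1:] ^ 2 * [:2:]" and \<alpha>=\<alpha> and \<beta>=\<beta> and u="[:1,1:]" and ea="[:0, -1:]" and eb="[:1,1:] * [:1,1,1,1:] ^ 3"
     and Kz="[:-8, -5, 41, -33, 25, -11, -6, 4, -36, 25, -22, 37, -15, 14, -5, -3, 2, -18, 7, -6, 14:]" and Qx="[:-10, 24, -19, 6, 15, -23, 13, -2, -4, -10, 21, -21, 4, 13, -21, 15, 0, -1, -10, 21, -20, 3, 13, -20, 14:]" and Qy="[:-11, 10, -9, 4, -4, -4, 7, -6, 14:]"])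
  subgoal using assms by simp
  subgoal by (rule poly_eq_poly_eq_iff[THEN iffD1], rule ext, simp, algebra)
  subgoal by (rule poly_eq_poly_eq_iff[THEN iffD1], rule ext, simp, algebra)
  apply (rule tail_i_c2_a)
  apply (rule tail_i_c2_b)
  subgoal by simp
  subgoal by (simp only: Nk_mult Nk_power Nk_1 N2_neg1 N3_neg1 N2_c2 N2_c4 N2_c5 N2_c7 N3_c2 N3_c4 N3_c5 N3_c7; simp?)
  subgoal by (rule N1_mx)
  subgoal by (simp only: Nk_mult Nk_power Nk_1 N2_neg1 N3_neg1 N2_c2 N2_c4 N2_c5 N2_c7 N3_c2 N3_c4 N3_c5 N3_c7; simp?)
  done

lemma case_i_220:
  fixes h \<alpha> \<beta> :: "int poly" and r0 r1 r2 :: int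
  assumes hd: "h = [:r0:] + [:-1,1:] * [:r1:] + [:-1,1:] ^ 2 * [:r2:] + [:3:] * \<alpha> + [:-1,1:] ^ 3 * \<beta>"
    and "r0 = 2" "r1 = 2" "r2 = 0"
  shows "\<exists>F. poly F 1 = 3 \<and> Nk 1 F = 3 \<and> Nk 3 F = 3 \<and> Nk 2 F = 3 * Nk 2 (1 + [:-1,1:] ^ 5 * h) \<and> M27 F = 81 * Nk 2 (1 + [:-1,1:] ^ 5 * h)"
  apply (rule gen_i[where \<rho>="[:2:] + [:-1,1:] * [:2:] + [:-1,1:] ^ 2 * [:0:]" and \<alpha>=\<alpha> and \<beta>=\<beta> and u="(-1)" and ea="[:0, 0, -1:]" and eb="(-1) * [:1,1,1,1,1,1,1:] ^ 3"
     and Kz="[:-2, 0, 3, -24, 25, -31, 26, -27, 23, -5, 8, 5, -8, 16, -14, 13, -15, 10, -5, 5, -2:]" and Qx="[:-3, 6, -11, 8, -12, 6, -6, 0, 1, -4, 9, -8, 12, -7, 9, -2, 2, 1, -3, 8, -11, 11, -10, 7, -2:]" and Qy="[:-2, 5, -6, 8, -10, 8, -5, 5, -2:]"])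
  subgoal using assms by simp
  subgoal by (rule poly_eq_poly_eq_iff[THEN iffD1], rule ext, simp, algebra)
  subgoal by (rule poly_eq_poly_eq_iff[THEN iffD1], rule ext, simp, algebra)
  apply (rule tail_i_m1_a)
  apply (rule tail_i_m1_b)
  subgoal by simp
  subgoal by (simp only: Nk_mult Nk_power Nk_1 N2_neg1 N3_neg1 N2_c2 N2_c4 N2_c5 N2_c7 N3_c2 N3_c4 N3_c5 N3_c7; simp?)
  subgoal by (rule N1_mx2)
  subgoal by (simp only: Nk_mult Nk_power Nk_1 N2_neg1 N3_neg1 N2_c2 N2_c4 N2_c5 N2_c7 N3_c2 N3_c4 N3_c5 N3_c7; simp?)
  done

lemma case_i_221:
  fixes h \<alpha> \<beta> :: "int poly" and r0 r1 r2 :: int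
  assumes hd: "h = [:r0:] + [:-1,1:] * [:r1:] + [:-1,1:] ^ 2 * [:r2:] + [:3:] * \<alpha> + [:-1,1:] ^ 3 * \<beta>"
    and "r0 = 2" "r1 = 2" "r2 = 1"
  shows "\<exists>F. poly F 1 = 3 \<and> Nk 1 F = 3 \<and> Nk 3 F = 3 \<and> Nk 2 F = 3 * Nk 2 (1 + [:-1,1:] ^ 5 * h) \<and> M27 F = 81 * Nk 2 (1 + [:-1,1:] ^ 5 * h)"
  apply (rule gen_i[where \<rho>="[:2:] + [:-1,1:] * [:2:] + [:-1,1:] ^ 2 * [:1:]" and \<alpha>=\<alpha> and \<beta>=\<beta> and u="[:1,1,1,1,1:]" and ea="[:0, -1:]" and eb="[:1,1,1,1,1:] * [:1,1,1,1,1,1,1:] ^ 3"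
     and Kz="[:3, -4, 16, -5, 31, -1, 32, -7, 22, -18, 0, -22, -15, -11, -16, 2, -11, 9, -5, 5, -4:]" and Qx="[:3, -1, 2, 12, -2, 16, 6, 10, 6, 8, -1, -3, 2, -17, -1, -13, -8, -8, -2, -7, -2, 6, -10, 9, -4:]" and Qy="[:2, -2, -1, 3, -3, 6, -5, 5, -4:]"])
  subgoal using assms by simp
  subgoal by (rule poly_eq_poly_eq_iff[THEN iffD1], rule ext, simp, algebra)
  subgoal by (rule poly_eq_poly_eq_iff[THEN iffD1], rule ext, simp, algebra)
  apply (rule tail_i_c5_a)
  apply (rule tail_i_c5_b)
  subgoal by simp
  subgoal by (simp only: Nk_mult Nk_power Nk_1 N2_neg1 N3_neg1 N2_c2 N2_c4 N2_c5 N2_c7 N3_c2 N3_c4 N3_c5 N3_c7; simp?)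
  subgoal by (rule N1_mx)
  subgoal by (simp only: Nk_mult Nk_power Nk_1 N2_neg1 N3_neg1 N2_c2 N2_c4 N2_c5 N2_c7 N3_c2 N3_c4 N3_c5 N3_c7; simp?)
  done

lemma case_i_222:
  fixes h \<alpha> \<beta> :: "int poly" and r0 r1 r2 :: int
  assumes hd: "h = [:r0:] + [:-1,1:] * [:r1:] + [:-1,1:] ^ 2 * [:r2:] + [:3:] * \<alpha> + [:-1,1:] ^ 3 * \<beta>"
    and "r0 = 2" "r1 = 2" "r2 = 2"
  shows "\<exists>F. poly F 1 = 3 \<and> Nk 1 F = 3 \<and> Nk 3 F = 3 \<and> Nk 2 F = 3 * Nk 2 (1 + [:-1,1:] ^ 5 * h) \<and> M27 F = 81 * Nk 2 (1 + [:-1,1:] ^ 5 * h)"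
  apply (rule gen_i[where \<rho>="[:2:] + [:-1,1:] * [:2:] + [:-1,1:] ^ 2 * [:2:]" and \<alpha>=\<alpha> and \<beta>=\<beta> and u="[:1,1:]" and ea="[:0, -1:]" and eb="[:1,1:] * [:1,1,1,1,1,1,1:] ^ 3"
     and Kz="[:-7, -1, 30, -19, 27, -2, 5, 9, -24, 11, -28, 16, -19, 6, -6, 1, 6, -9, 4, -7, 8:]" and Qx="[:-8, 20, -14, 6, 16, -12, 13, 4, -1, -8, 17, -19, -1, 7, -20, 6, -2, -3, -9, 17, -15, 3, 11, -15, 8:]" and Qy="[:-9, 8, -6, 5, -1, -1, 4, -7, 8:]"])
  subgoal using assms by simp
  subgoal by (rule poly_eq_poly_eq_iff[THEN iffD1], rule ext, simp, algebra)
  subgoal by (rule poly_eq_poly_eq_iff[THEN iffD1], rule ext, simp, algebra)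
  apply (rule tail_i_c2_a)
  apply (rule tail_i_c2_b)
  subgoal by simp
  subgoal by (simp only: Nk_mult Nk_power Nk_1 N2_neg1 N3_neg1 N2_c2 N2_c4 N2_c5 N2_c7 N3_c2 N3_c4 N3_c5 N3_c7; simp?)
  subgoal by (rule N1_mx)
  subgoal by (simp only: Nk_mult Nk_power Nk_1 N2_neg1 N3_neg1 N2_c2 N2_c4 N2_c5 N2_c7 N3_c2 N3_c4 N3_c5 N3_c7; simp?)
  done

lemma tail_ii_m1_a: "[:1,-1::int:] * (-1) * ([:3:] * [:-1,1:] ^ 5) + [:1,0,0,0,0,0,0,0,0,1,0,0,0,0,0,0,0,0,1:] * [:-1, 6, -15, 20, -15, 6, -1:] = [:-1,1:] * [:1,1,1:] * [:1,0,0,1,0,0,1:] * [:-2, 12, -30, 40, -30, 12, -2, 0, 0, -1, 6, -15, 20, -15, 6, -1:]"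
  by (rule poly_eq_poly_eq_iff[THEN iffD1], rule ext, simp, algebra)

lemma tail_ii_m1_b: "[:1,-1::int:] * (-1) * [:-1,1:] ^ 8 + [:1,0,0,0,0,0,0,0,0,1,0,0,0,0,0,0,0,0,1:] * [:0, -3, 12, -28, 42, -42, 28, -12, 3:] = [:-1,1:] * [:1,1,1:] * [:1,0,0,1,0,0,1:] * [:1, -6, 24, -56, 84, -84, 56, -24, 6, 0, -3, 12, -28, 42, -42, 28, -12, 3:]"
  by (rule poly_eq_poly_eq_iff[THEN iffD1], rule ext, simp, algebra)

lemma case_ii_100:
  fixes h \<alpha> \<beta> :: "int poly" and r0 r1 r2 :: int
  assumes hd: "h = [:r0:] + [:-1,1:] * [:r1:] + [:-1,1:] ^ 2 * [:r2:] + [:3:] * \<alpha> + [:-1,1:] ^ 3 * \<beta>"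
    and "r0 = 1" "r1 = 0" "r2 = 0"
  shows "\<exists>F. poly F 1 = 3 \<and> Nk 1 F = 3 \<and> Nk 2 F = 3 \<and> Nk 3 F = 3 * Nk 3 (1 + [:-1,1:] ^ 5 * h) \<and> M27 F = 81 * Nk 3 (1 + [:-1,1:] ^ 5 * h)"
  apply (rule gen_ii[where \<rho>="[:1:] + [:-1,1:] * [:0:] + [:-1,1:] ^ 2 * [:0:]" and \<alpha>=\<alpha> and \<beta>=\<beta> and u="(-1)" and ea="[:0, 0, -1:]" and eb="(-1)"
     and Kz="[:0, 2, -5, 7, -5, 2:]" and Qx="[:0, -3, 14, -25, 21, 0, -20, 20, 0, -20, 22, -7, -8, 10, 0, -10, 10, 0, -10, 12, -7, 2:]" and Qy="[:1, -4, 10, -14, 14, -14, 14, -10, 4, 0, -2, 5, -7, 7, -7, 7, -5, 2:]"])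
  subgoal using assms by simp
  subgoal by (rule poly_eq_poly_eq_iff[THEN iffD1], rule ext, simp, algebra)
  subgoal by (rule poly_eq_poly_eq_iff[THEN iffD1], rule ext, simp, algebra)
  apply (rule tail_ii_m1_a)
  apply (rule tail_ii_m1_b)
  subgoal by simp
  subgoal by (simp only: Nk_mult Nk_power Nk_1 N2_neg1 N3_neg1 N2_c2 N2_c4 N2_c5 N2_c7 N3_c2 N3_c4 N3_c5 N3_c7; simp?)
  subgoal by (rule N1_mx2)
  subgoal by (simp only: Nk_mult Nk_power Nk_1 N2_neg1 N3_neg1 N2_c2 N2_c4 N2_c5 N2_c7 N3_c2 N3_c4 N3_c5 N3_c7; simp?)
  done

lemma tail_ii_c2_a: "[:1,-1::int:] * [:1,1:] * ([:3:] * [:-1,1:] ^ 5) + [:1,0,0,0,0,0,0,0,0,1,0,0,0,0,0,0,0,0,1:] * [:1, -5, 9, -5, -5, 9, -5, 1:] = [:-1,1:] * [:1,1,1:] * [:1,0,0,1,0,0,1:] * [:2, -10, 18, -10, -10, 18, -10, 2, 0, 1, -5, 9, -5, -5, 9, -5, 1:]"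
  by (rule poly_eq_poly_eq_iff[THEN iffD1], rule ext, simp, algebra)

lemma tail_ii_c2_b: "[:1,-1::int:] * [:1,1:] * [:-1,1:] ^ 8 + [:1,0,0,0,0,0,0,0,0,1,0,0,0,0,0,0,0,0,1:] * [:-3, 3, -9, 16, -14, 0, 14, -16, 9:] = [:-1,1:] * [:1,1,1:] * [:1,0,0,1,0,0,1:] * [:2, 5, -18, 32, -28, 0, 28, -32, 18, -3, 3, -9, 16, -14, 0, 14, -16, 9:]"
  by (rule poly_eq_poly_eq_iff[THEN iffD1], rule ext, simp, algebra)

lemma case_ii_101:
  fixes h \<alpha> \<beta> :: "int poly" and r0 r1 r2 :: int
  assumes hd: "h = [:r0:] + [:-1,1:] * [:r1:] + [:-1,1:] ^ 2 * [:r2:] + [:3:] * \<alpha> + [:-1,1:] ^ 3 * \<beta>"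
    and "r0 = 1" "r1 = 0" "r2 = 1"
  shows "\<exists>F. poly F 1 = 3 \<and> Nk 1 F = 3 \<and> Nk 2 F = 3 \<and> Nk 3 F = 3 * Nk 3 (1 + [:-1,1:] ^ 5 * h) \<and> M27 F = 81 * Nk 3 (1 + [:-1,1:] ^ 5 * h)"
  apply (rule gen_ii[where \<rho>="[:1:] + [:-1,1:] * [:0:] + [:-1,1:] ^ 2 * [:1:]" and \<alpha>=\<alpha> and \<beta>=\<beta> and u="[:1,1:]" and ea="[:0, -1:]" and eb="[:1,1:]"
     and Kz="[:1, -4, 10, -11, 3, 8, -11, 7, -2:]" and Qx="[:0, 9, -30, 43, -19, -39, 80, -55, -20, 75, -59, -6, 54, -45, -1, 35, -27, -10, 38, -32, 4, 17, -18, 9, -2:]" and Qy="[:-1, 8, -19, 23, -14, 4, 0, -8, 20, -23, 18, -14, 12, -7, 2, 0, -4, 10, -11, 7, -2:]"])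
  subgoal using assms by simp
  subgoal by (rule poly_eq_poly_eq_iff[THEN iffD1], rule ext, simp, algebra)
  subgoal by (rule poly_eq_poly_eq_iff[THEN iffD1], rule ext, simp, algebra)
  apply (rule tail_ii_c2_a)
  apply (rule tail_ii_c2_b)
  subgoal by simp
  subgoal by (simp only: Nk_mult Nk_power Nk_1 N2_neg1 N3_neg1 N2_c2 N2_c4 N2_c5 N2_c7 N3_c2 N3_c4 N3_c5 N3_c7; simp?)
  subgoal by (rule N1_mx)
  subgoal by (simp only: Nk_mult Nk_power Nk_1 N2_neg1 N3_neg1 N2_c2 N2_c4 N2_c5 N2_c7 N3_c2 N3_c4 N3_c5 N3_c7; simp?)
  done

lemma tail_ii_c5_a: "[:1,-1::int:] * [:1,1,1,1,1:] * ([:3:] * [:-1,1:] ^ 5) + [:1,0,0,0,0,0,0,0,0,1,0,0,0,0,0,0,0,0,1:] * [:-4, -4, 10, -10, 5, -2, 5, -10, 10:] = [:-1,1:] * [:1,1,1:] * [:1,0,0,1,0,0,1:] * [:7, -11, 20, -20, 10, -4, 10, -20, 20, -4, -4, 10, -10, 5, -2, 5, -10, 10:]"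
  by (rule poly_eq_poly_eq_iff[THEN iffD1], rule ext, simp, algebra)

lemma tail_ii_c5_b: "[:1,-1::int:] * [:1,1,1,1,1:] * [:-1,1:] ^ 8 + [:1,0,0,0,0,0,0,0,0,1,0,0,0,0,0,0,0,0,1:] * [:23, -16, 0, 16, -23, 19, -12, 12, -19:] = [:-1,1:] * [:1,1,1:] * [:1,0,0,1,0,0,1:] * [:-24, 24, -28, 40, -47, 38, -24, 24, -38, 23, -16, 0, 16, -23, 19, -12, 12, -19:]"
  by (rule poly_eq_poly_eq_iff[THEN iffD1], rule ext, simp, algebra)

lemma case_ii_102:
  fixes h \<alpha> \<beta> :: "int poly" and r0 r1 r2 :: int
  assumes hd: "h = [:r0:] + [:-1,1:] * [:r1:] + [:-1,1:] ^ 2 * [:r2:] + [:3:] * \<alpha> + [:-1,1:] ^ 3 * \<beta>"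
    and "r0 = 1" "r1 = 0" "r2 = 2"
  shows "\<exists>F. poly F 1 = 3 \<and> Nk 1 F = 3 \<and> Nk 2 F = 3 \<and> Nk 3 F = 3 * Nk 3 (1 + [:-1,1:] ^ 5 * h) \<and> M27 F = 81 * Nk 3 (1 + [:-1,1:] ^ 5 * h)"
  apply (rule gen_ii[where \<rho>="[:1:] + [:-1,1:] * [:0:] + [:-1,1:] ^ 2 * [:2:]" and \<alpha>=\<alpha> and \<beta>=\<beta> and u="[:1,1,1,1,1:]" and ea="[:0, -1:]" and eb="[:1,1,1,1,1:]"
     and Kz="[:-24, 8, 13, -26, 25, -15, 11, -18, 27:]" and Qx="[:-26, 54, -68, 68, -50, 12, 16, 8, -77, 120, -78, -15, 65, -25, -55, 91, -54, -10, 40, -22, -5, 1, 29, -45, 27:]" and Qy="[:-27, 27, -39, 81, -77, 70, -76, 86, -84, 46, -44, 41, 2, -17, 28, -37, 43, -42, 11, -18, 27:]"])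
  subgoal using assms by simp
  subgoal by (rule poly_eq_poly_eq_iff[THEN iffD1], rule ext, simp, algebra)
  subgoal by (rule poly_eq_poly_eq_iff[THEN iffD1], rule ext, simp, algebra)
  apply (rule tail_ii_c5_a)
  apply (rule tail_ii_c5_b)
  subgoal by simp
  subgoal by (simp only: Nk_mult Nk_power Nk_1 N2_neg1 N3_neg1 N2_c2 N2_c4 N2_c5 N2_c7 N3_c2 N3_c4 N3_c5 N3_c7; simp?)
  subgoal by (rule N1_mx)
  subgoal by (simp only: Nk_mult Nk_power Nk_1 N2_neg1 N3_neg1 N2_c2 N2_c4 N2_c5 N2_c7 N3_c2 N3_c4 N3_c5 N3_c7; simp?)
  done

lemma case_ii_110:
  fixes h \<alpha> \<beta> :: "int poly" and r0 r1 r2 :: int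
  assumes hd: "h = [:r0:] + [:-1,1:] * [:r1:] + [:-1,1:] ^ 2 * [:r2:] + [:3:] * \<alpha> + [:-1,1:] ^ 3 * \<beta>"
    and "r0 = 1" "r1 = 1" "r2 = 0"
  shows "\<exists>F. poly F 1 = 3 \<and> Nk 1 F = 3 \<and> Nk 2 F = 3 \<and> Nk 3 F = 3 * Nk 3 (1 + [:-1,1:] ^ 5 * h) \<and> M27 F = 81 * Nk 3 (1 + [:-1,1:] ^ 5 * h)"
  apply (rule gen_ii[where \<rho>="[:1:] + [:-1,1:] * [:1:] + [:-1,1:] ^ 2 * [:0:]" and \<alpha>=\<alpha> and \<beta>=\<beta> and u="(-1)" and ea="[:0, 0, -1:]" and eb="(-1) * [:1,1,1,1:] ^ 3"
     and Kz="[:1, -1, 1, -6, 6, -5, 3, 1, 1:]" and Qx="[:0, 1, -5, 12, -21, 19, -1, -16, 18, -1, -18, 20, -8, -6, 9, 0, -8, 9, 0, -10, 11, -7, 2, 0, 1:]" and Qy="[:1, 3, -2, 12, -15, 12, -18, 10, -12, 5, 3, 1, 7, -7, 6, -9, 5, -6, 3, 1, 1:]"])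
  subgoal using assms by simp
  subgoal by (rule poly_eq_poly_eq_iff[THEN iffD1], rule ext, simp, algebra)
  subgoal by (rule poly_eq_poly_eq_iff[THEN iffD1], rule ext, simp, algebra)
  apply (rule tail_ii_m1_a)
  apply (rule tail_ii_m1_b)
  subgoal by simp
  subgoal by (simp only: Nk_mult Nk_power Nk_1 N2_neg1 N3_neg1 N2_c2 N2_c4 N2_c5 N2_c7 N3_c2 N3_c4 N3_c5 N3_c7; simp?)
  subgoal by (rule N1_mx2)
  subgoal by (simp only: Nk_mult Nk_power Nk_1 N2_neg1 N3_neg1 N2_c2 N2_c4 N2_c5 N2_c7 N3_c2 N3_c4 N3_c5 N3_c7; simp?)
  done

lemma case_ii_111:
  fixes h \<alpha> \<beta> :: "int poly" and r0 r1 r2 :: int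
  assumes hd: "h = [:r0:] + [:-1,1:] * [:r1:] + [:-1,1:] ^ 2 * [:r2:] + [:3:] * \<alpha> + [:-1,1:] ^ 3 * \<beta>"
    and "r0 = 1" "r1 = 1" "r2 = 1"
  shows "\<exists>F. poly F 1 = 3 \<and> Nk 1 F = 3 \<and> Nk 2 F = 3 \<and> Nk 3 F = 3 * Nk 3 (1 + [:-1,1:] ^ 5 * h) \<and> M27 F = 81 * Nk 3 (1 + [:-1,1:] ^ 5 * h)"
  apply (rule gen_ii[where \<rho>="[:1:] + [:-1,1:] * [:1:] + [:-1,1:] ^ 2 * [:1:]" and \<alpha>=\<alpha> and \<beta>=\<beta> and u="[:1,1:]" and ea="[:0, -1:]" and eb="[:1,1:] * [:1,1,1,1:] ^ 3"
     and Kz="[:-1, -2, 7, -4, 5, 4, -7, 3, -4:]" and Qx="[:-1, 6, -15, 24, -13, -16, 41, -37, -2, 37, -37, 7, 26, -28, 6, 15, -18, -1, 18, -19, 8, 7, -10, 7, -4:]" and Qy="[:-2, 1, -14, 10, -11, 7, 6, 4, 16, -13, 8, -15, 3, -7, 3, 3, 2, 8, -7, 3, -4:]"])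
  subgoal using assms by simp
  subgoal by (rule poly_eq_poly_eq_iff[THEN iffD1], rule ext, simp, algebra)
  subgoal by (rule poly_eq_poly_eq_iff[THEN iffD1], rule ext, simp, algebra)
  apply (rule tail_ii_c2_a)
  apply (rule tail_ii_c2_b)
  subgoal by simp
  subgoal by (simp only: Nk_mult Nk_power Nk_1 N2_neg1 N3_neg1 N2_c2 N2_c4 N2_c5 N2_c7 N3_c2 N3_c4 N3_c5 N3_c7; simp?)
  subgoal by (rule N1_mx)
  subgoal by (simp only: Nk_mult Nk_power Nk_1 N2_neg1 N3_neg1 N2_c2 N2_c4 N2_c5 N2_c7 N3_c2 N3_c4 N3_c5 N3_c7; simp?)
  done

lemma case_ii_112:
  fixes h \<alpha> \<beta> :: "int poly" and r0 r1 r2 :: int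
  assumes hd: "h = [:r0:] + [:-1,1:] * [:r1:] + [:-1,1:] ^ 2 * [:r2:] + [:3:] * \<alpha> + [:-1,1:] ^ 3 * \<beta>"
    and "r0 = 1" "r1 = 1" "r2 = 2"
  shows "\<exists>F. poly F 1 = 3 \<and> Nk 1 F = 3 \<and> Nk 2 F = 3 \<and> Nk 3 F = 3 * Nk 3 (1 + [:-1,1:] ^ 5 * h) \<and> M27 F = 81 * Nk 3 (1 + [:-1,1:] ^ 5 * h)"
  apply (rule gen_ii[where \<rho>="[:1:] + [:-1,1:] * [:1:] + [:-1,1:] ^ 2 * [:2:]" and \<alpha>=\<alpha> and \<beta>=\<beta> and u="[:1,1,1,1,1:]" and ea="[:0, -1:]" and eb="[:1,1,1,1,1:] * [:1,1,1,1:] ^ 3"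
     and Kz="[:-23, 5, 7, -18, 23, -9, 11, -13, 18:]" and Qx="[:-24, 43, -50, 49, -36, 16, 5, 5, -52, 84, -64, 0, 44, -21, -32, 64, -45, -1, 23, -17, 1, -2, 24, -31, 18:]" and Qy="[:-25, 15, -36, 57, -64, 54, -54, 75, -53, 45, -31, 29, -5, -18, 16, -29, 36, -27, 11, -13, 18:]"])
  subgoal using assms by simp
  subgoal by (rule poly_eq_poly_eq_iff[THEN iffD1], rule ext, simp, algebra)
  subgoal by (rule poly_eq_poly_eq_iff[THEN iffD1], rule ext, simp, algebra)
  apply (rule tail_ii_c5_a)
  apply (rule tail_ii_c5_b)
  subgoal by simp
  subgoal by (simp only: Nk_mult Nk_power Nk_1 N2_neg1 N3_neg1 N2_c2 N2_c4 N2_c5 N2_c7 N3_c2 N3_c4 N3_c5 N3_c7; simp?)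
  subgoal by (rule N1_mx)
  subgoal by (simp only: Nk_mult Nk_power Nk_1 N2_neg1 N3_neg1 N2_c2 N2_c4 N2_c5 N2_c7 N3_c2 N3_c4 N3_c5 N3_c7; simp?)
  done

lemma case_ii_120:
  fixes h \<alpha> \<beta> :: "int poly" and r0 r1 r2 :: int
  assumes hd: "h = [:r0:] + [:-1,1:] * [:r1:] + [:-1,1:] ^ 2 * [:r2:] + [:3:] * \<alpha> + [:-1,1:] ^ 3 * \<beta>"
    and "r0 = 1" "r1 = 2" "r2 = 0"
  shows "\<exists>F. poly F 1 = 3 \<and> Nk 1 F = 3 \<and> Nk 2 F = 3 \<and> Nk 3 F = 3 * Nk 3 (1 + [:-1,1:] ^ 5 * h) \<and> M27 F = 81 * Nk 3 (1 + [:-1,1:] ^ 5 * h)"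
  apply (rule gen_ii[where \<rho>="[:1:] + [:-1,1:] * [:2:] + [:-1,1:] ^ 2 * [:0:]" and \<alpha>=\<alpha> and \<beta>=\<beta> and u="(-1)" and ea="[:0, 0, -1:]" and eb="(-1) * [:1,1,1,1,1,1,1:] ^ 3"
     and Kz="[:1, -3, 9, -16, 19, -12, 4, -1:]" and Qx="[:-1, 7, -23, 49, -62, 37, 16, -52, 36, 17, -56, 48, -8, -21, 17, 8, -26, 18, 9, -30, 30, -16, 5, -1:]" and Qy="[:0, 8, -15, 38, -39, 45, -40, 37, -27, 4, -2, -12, 15, -23, 21, -20, 20, -12, 4, -1:]"])
  subgoal using assms by simp
  subgoal by (rule poly_eq_poly_eq_iff[THEN iffD1], rule ext, simp, algebra)
  subgoal by (rule poly_eq_poly_eq_iff[THEN iffD1], rule ext, simp, algebra)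
  apply (rule tail_ii_m1_a)
  apply (rule tail_ii_m1_b)
  subgoal by simp
  subgoal by (simp only: Nk_mult Nk_power Nk_1 N2_neg1 N3_neg1 N2_c2 N2_c4 N2_c5 N2_c7 N3_c2 N3_c4 N3_c5 N3_c7; simp?)
  subgoal by (rule N1_mx2)
  subgoal by (simp only: Nk_mult Nk_power Nk_1 N2_neg1 N3_neg1 N2_c2 N2_c4 N2_c5 N2_c7 N3_c2 N3_c4 N3_c5 N3_c7; simp?)
  done

lemma case_ii_121:
  fixes h \<alpha> \<beta> :: "int poly" and r0 r1 r2 :: int
  assumes hd: "h = [:r0:] + [:-1,1:] * [:r1:] + [:-1,1:] ^ 2 * [:r2:] + [:3:] * \<alpha> + [:-1,1:] ^ 3 * \<beta>"
    and "r0 = 1" "r1 = 2" "r2 = 1"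
  shows "\<exists>F. poly F 1 = 3 \<and> Nk 1 F = 3 \<and> Nk 2 F = 3 \<and> Nk 3 F = 3 * Nk 3 (1 + [:-1,1:] ^ 5 * h) \<and> M27 F = 81 * Nk 3 (1 + [:-1,1:] ^ 5 * h)"
  apply (rule gen_ii[where \<rho>="[:1:] + [:-1,1:] * [:2:] + [:-1,1:] ^ 2 * [:1:]" and \<alpha>=\<alpha> and \<beta>=\<beta> and u="[:1,1:]" and ea="[:0, -1:]" and eb="[:1,1:] * [:1,1,1,1,1,1,1:] ^ 3"
     and Kz="[:0, 0, 1, -2, 2, -2, -1, 4, -1:]" and Qx="[:1, 0, -3, 6, -10, 7, 7, -19, 16, 2, -18, 17, -1, -14, 13, 0, -9, 8, 1, -9, 9, -2, -5, 5, -1:]" and Qy="[:0, -3, -6, -4, -13, -2, -5, -1, 4, 4, 14, 3, 7, 1, 4, -1, -2, -1, -1, 4, -1:]"])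
  subgoal using assms by simp
  subgoal by (rule poly_eq_poly_eq_iff[THEN iffD1], rule ext, simp, algebra)
  subgoal by (rule poly_eq_poly_eq_iff[THEN iffD1], rule ext, simp, algebra)
  apply (rule tail_ii_c2_a)
  apply (rule tail_ii_c2_b)
  subgoal by simp
  subgoal by (simp only: Nk_mult Nk_power Nk_1 N2_neg1 N3_neg1 N2_c2 N2_c4 N2_c5 N2_c7 N3_c2 N3_c4 N3_c5 N3_c7; simp?)
  subgoal by (rule N1_mx)
  subgoal by (simp only: Nk_mult Nk_power Nk_1 N2_neg1 N3_neg1 N2_c2 N2_c4 N2_c5 N2_c7 N3_c2 N3_c4 N3_c5 N3_c7; simp?)
  done

lemma case_ii_122:
  fixes h \<alpha> \<beta> :: "int poly" and r0 r1 r2 :: int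
  assumes hd: "h = [:r0:] + [:-1,1:] * [:r1:] + [:-1,1:] ^ 2 * [:r2:] + [:3:] * \<alpha> + [:-1,1:] ^ 3 * \<beta>"
    and "r0 = 1" "r1 = 2" "r2 = 2"
  shows "\<exists>F. poly F 1 = 3 \<and> Nk 1 F = 3 \<and> Nk 2 F = 3 \<and> Nk 3 F = 3 * Nk 3 (1 + [:-1,1:] ^ 5 * h) \<and> M27 F = 81 * Nk 3 (1 + [:-1,1:] ^ 5 * h)"
  apply (rule gen_ii[where \<rho>="[:1:] + [:-1,1:] * [:2:] + [:-1,1:] ^ 2 * [:2:]" and \<alpha>=\<alpha> and \<beta>=\<beta> and u="[:1,1,1,1,1:]" and ea="[:0, -1:]" and eb="[:1,1,1,1,1:] * [:1,1,1,1,1,1,1:] ^ 3"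
     and Kz="[:-14, 9, 4, -13, 14, -11, 6, -8, 14:]" and Qx="[:-14, 31, -36, 32, -27, 15, -1, 2, -27, 56, -51, 11, 25, -22, -14, 42, -36, 8, 14, -13, 3, -3, 14, -22, 14:]" and Qy="[:-15, 13, -24, 32, -59, 24, -55, 35, -52, 32, -13, 39, 13, 7, 24, -13, 25, -24, 6, -8, 14:]"])
  subgoal using assms by simp
  subgoal by (rule poly_eq_poly_eq_iff[THEN iffD1], rule ext, simp, algebra)
  subgoal by (rule poly_eq_poly_eq_iff[THEN iffD1], rule ext, simp, algebra)
  apply (rule tail_ii_c5_a)
  apply (rule tail_ii_c5_b)
  subgoal by simp
  subgoal by (simp only: Nk_mult Nk_power Nk_1 N2_neg1 N3_neg1 N2_c2 N2_c4 N2_c5 N2_c7 N3_c2 N3_c4 N3_c5 N3_c7; simp?)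
  subgoal by (rule N1_mx)
  subgoal by (simp only: Nk_mult Nk_power Nk_1 N2_neg1 N3_neg1 N2_c2 N2_c4 N2_c5 N2_c7 N3_c2 N3_c4 N3_c5 N3_c7; simp?)
  done

lemma tail_ii_1_a: "[:1,-1::int:] * 1 * ([:3:] * [:-1,1:] ^ 5) + [:1,0,0,0,0,0,0,0,0,1,0,0,0,0,0,0,0,0,1:] * [:1, -6, 15, -20, 15, -6, 1:] = [:-1,1:] * [:1,1,1:] * [:1,0,0,1,0,0,1:] * [:2, -12, 30, -40, 30, -12, 2, 0, 0, 1, -6, 15, -20, 15, -6, 1:]"
  by (rule poly_eq_poly_eq_iff[THEN iffD1], rule ext, simp, algebra)

lemma tail_ii_1_b: "[:1,-1::int:] * 1 * [:-1,1:] ^ 8 + [:1,0,0,0,0,0,0,0,0,1,0,0,0,0,0,0,0,0,1:] * [:0, 3, -12, 28, -42, 42, -28, 12, -3:] = [:-1,1:] * [:1,1,1:] * [:1,0,0,1,0,0,1:] * [:-1, 6, -24, 56, -84, 84, -56, 24, -6, 0, 3, -12, 28, -42, 42, -28, 12, -3:]"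
  by (rule poly_eq_poly_eq_iff[THEN iffD1], rule ext, simp, algebra)

lemma case_ii_200:
  fixes h \<alpha> \<beta> :: "int poly" and r0 r1 r2 :: int
  assumes hd: "h = [:r0:] + [:-1,1:] * [:r1:] + [:-1,1:] ^ 2 * [:r2:] + [:3:] * \<alpha> + [:-1,1:] ^ 3 * \<beta>"
    and "r0 = 2" "r1 = 0" "r2 = 0"
  shows "\<exists>F. poly F 1 = 3 \<and> Nk 1 F = 3 \<and> Nk 2 F = 3 \<and> Nk 3 F = 3 * Nk 3 (1 + [:-1,1:] ^ 5 * h) \<and> M27 F = 81 * Nk 3 (1 + [:-1,1:] ^ 5 * h)"
  apply (rule gen_ii[where \<rho>="[:2:] + [:-1,1:] * [:0:] + [:-1,1:] ^ 2 * [:0:]" and \<alpha>=\<alpha> and \<beta>=\<beta> and u="1" and ea="[:0, 1:]" and eb="[:1,1,1,1:] ^ 3"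
     and Kz="[:0, -3, 11, -12, 11, -4, 0, -1, -1:]" and Qx="[:-1, 8, -25, 45, -39, 2, 35, -38, 2, 36, -41, 16, 13, -18, 1, 17, -19, 1, 18, -22, 15, -5, 1, 0, -1:]" and Qy="[:-2, 6, -22, 26, -27, 30, -24, 24, -6, 0, 1, -13, 12, -14, 15, -12, 12, -3, 0, -1, -1:]"])
  subgoal using assms by simp
  subgoal by (rule poly_eq_poly_eq_iff[THEN iffD1], rule ext, simp, algebra)
  subgoal by (rule poly_eq_poly_eq_iff[THEN iffD1], rule ext, simp, algebra)
  apply (rule tail_ii_1_a)
  apply (rule tail_ii_1_b)
  subgoal by simp
  subgoal by (simp only: Nk_mult Nk_power Nk_1 N2_neg1 N3_neg1 N2_c2 N2_c4 N2_c5 N2_c7 N3_c2 N3_c4 N3_c5 N3_c7; simp?)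
  subgoal by (rule N1_x)
  subgoal by (simp only: Nk_mult Nk_power Nk_1 N2_neg1 N3_neg1 N2_c2 N2_c4 N2_c5 N2_c7 N3_c2 N3_c4 N3_c5 N3_c7; simp?)
  done

lemma tail_ii_c4_a: "[:1,-1::int:] * [:1,1,1,1:] * ([:3:] * [:-1,1:] ^ 5) + [:1,0,0,0,0,0,0,0,0,1,0,0,0,0,0,0,0,0,1:] * [:2, -5, 10, -10, 4, 4, -10, 10, -5:] = [:-1,1:] * [:1,1,1:] * [:1,0,0,1,0,0,1:] * [:1, -10, 20, -20, 8, 8, -20, 20, -10, 2, -5, 10, -10, 4, 4, -10, 10, -5:]"
  by (rule poly_eq_poly_eq_iff[THEN iffD1], rule ext, simp, algebra)

lemma tail_ii_c4_b: "[:1,-1::int:] * [:1,1,1,1:] * [:-1,1:] ^ 8 + [:1,0,0,0,0,0,0,0,0,1,0,0,0,0,0,0,0,0,1:] * [:-19, 12, -12, 19, -23, 16, 0, -16, 23:] = [:-1,1:] * [:1,1,1:] * [:1,0,0,1,0,0,1:] * [:18, -4, -16, 37, -46, 32, 0, -32, 46, -19, 12, -12, 19, -23, 16, 0, -16, 23:]"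
  by (rule poly_eq_poly_eq_iff[THEN iffD1], rule ext, simp, algebra)

lemma case_ii_201:
  fixes h \<alpha> \<beta> :: "int poly" and r0 r1 r2 :: int
  assumes hd: "h = [:r0:] + [:-1,1:] * [:r1:] + [:-1,1:] ^ 2 * [:r2:] + [:3:] * \<alpha> + [:-1,1:] ^ 3 * \<beta>"
    and "r0 = 2" "r1 = 0" "r2 = 1"
  shows "\<exists>F. poly F 1 = 3 \<and> Nk 1 F = 3 \<and> Nk 2 F = 3 \<and> Nk 3 F = 3 * Nk 3 (1 + [:-1,1:] ^ 5 * h) \<and> M27 F = 81 * Nk 3 (1 + [:-1,1:] ^ 5 * h)"
  apply (rule gen_ii[where \<rho>="[:2:] + [:-1,1:] * [:0:] + [:-1,1:] ^ 2 * [:1:]" and \<alpha>=\<alpha> and \<beta>=\<beta> and u="[:1,1,1,1:]" and ea="[:0, 1:]" and eb="[:1,1,1,1:] * [:1,1,1,1:] ^ 3"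
     and Kz="[:5, -10, 14, -16, 18, 1, -10, 17, -18:]" and Qx="[:3, 3, -32, 68, -61, 0, 85, -122, 64, 40, -107, 80, 11, -73, 63, 0, -46, 28, 23, -61, 52, -7, -27, 35, -18:]" and Qy="[:2, 4, -33, 27, -40, 31, -9, 3, 38, -25, 44, -50, 21, -28, 13, -6, 1, 19, -10, 17, -18:]"])
  subgoal using assms by simp
  subgoal by (rule poly_eq_poly_eq_iff[THEN iffD1], rule ext, simp, algebra)
  subgoal by (rule poly_eq_poly_eq_iff[THEN iffD1], rule ext, simp, algebra)
  apply (rule tail_ii_c4_a)
  apply (rule tail_ii_c4_b)
  subgoal by simp
  subgoal by (simp only: Nk_mult Nk_power Nk_1 N2_neg1 N3_neg1 N2_c2 N2_c4 N2_c5 N2_c7 N3_c2 N3_c4 N3_c5 N3_c7; simp?)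
  subgoal by (rule N1_x)
  subgoal by (simp only: Nk_mult Nk_power Nk_1 N2_neg1 N3_neg1 N2_c2 N2_c4 N2_c5 N2_c7 N3_c2 N3_c4 N3_c5 N3_c7; simp?)
  done

lemma tail_ii_c7_a: "[:1,-1::int:] * [:1,1,1,1,1,1,1:] * ([:3:] * [:-1,1:] ^ 5) + [:1,0,0,0,0,0,0,0,0,1,0,0,0,0,0,0,0,0,1:] * [:-9, 5, 5, -9, 5, -1, 0, -1, 5:] = [:-1,1:] * [:1,1,1:] * [:1,0,0,1,0,0,1:] * [:12, -20, 25, -21, 10, -2, 0, -2, 10, -9, 5, 5, -9, 5, -1, 0, -1, 5:]"
  by (rule poly_eq_poly_eq_iff[THEN iffD1], rule ext, simp, algebra)

lemma tail_ii_c7_b: "[:1,-1::int:] * [:1,1,1,1,1,1,1:] * [:-1,1:] ^ 8 + [:1,0,0,0,0,0,0,0,0,1,0,0,0,0,0,0,0,0,1:] * [:9, -16, 14, 0, -14, 16, -9, 3, -3:] = [:-1,1:] * [:1,1,1:] * [:1,0,0,1,0,0,1:] * [:-10, 24, -42, 56, -56, 40, -19, 6, -6, 9, -16, 14, 0, -14, 16, -9, 3, -3:]"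
  by (rule poly_eq_poly_eq_iff[THEN iffD1], rule ext, simp, algebra)

lemma case_ii_202:
  fixes h \<alpha> \<beta> :: "int poly" and r0 r1 r2 :: int
  assumes hd: "h = [:r0:] + [:-1,1:] * [:r1:] + [:-1,1:] ^ 2 * [:r2:] + [:3:] * \<alpha> + [:-1,1:] ^ 3 * \<beta>"
    and "r0 = 2" "r1 = 0" "r2 = 2"
  shows "\<exists>F. poly F 1 = 3 \<and> Nk 1 F = 3 \<and> Nk 2 F = 3 \<and> Nk 3 F = 3 * Nk 3 (1 + [:-1,1:] ^ 5 * h) \<and> M27 F = 81 * Nk 3 (1 + [:-1,1:] ^ 5 * h)"
  apply (rule gen_ii[where \<rho>="[:2:] + [:-1,1:] * [:0:] + [:-1,1:] ^ 2 * [:2:]" and \<alpha>=\<alpha> and \<beta>=\<beta> and u="[:1,1,1,1,1,1,1:]" and ea="[:0, 1:]" and eb="[:1,1,1,1,1,1,1:] * [:1,1,1,1:] ^ 3"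
     and Kz="[:-21, 20, -8, -16, 23, -12, 7, 0, 8:]" and Qx="[:-24, 67, -112, 119, -64, -23, 80, -52, -44, 137, -163, 98, 5, -66, 47, 26, -73, 55, -3, -32, 27, -11, 7, -8, 8:]" and Qy="[:-25, 41, -76, 89, -110, 96, -81, 69, -36, 38, -19, 24, -5, -3, 4, -23, 23, -20, 7, 0, 8:]"])
  subgoal using assms by simp
  subgoal by (rule poly_eq_poly_eq_iff[THEN iffD1], rule ext, simp, algebra)
  subgoal by (rule poly_eq_poly_eq_iff[THEN iffD1], rule ext, simp, algebra)
  apply (rule tail_ii_c7_a)
  apply (rule tail_ii_c7_b)
  subgoal by simp
  subgoal by (simp only: Nk_mult Nk_power Nk_1 N2_neg1 N3_neg1 N2_c2 N2_c4 N2_c5 N2_c7 N3_c2 N3_c4 N3_c5 N3_c7; simp?)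
  subgoal by (rule N1_x)
  subgoal by (simp only: Nk_mult Nk_power Nk_1 N2_neg1 N3_neg1 N2_c2 N2_c4 N2_c5 N2_c7 N3_c2 N3_c4 N3_c5 N3_c7; simp?)
  done

lemma case_ii_210:
  fixes h \<alpha> \<beta> :: "int poly" and r0 r1 r2 :: int
  assumes hd: "h = [:r0:] + [:-1,1:] * [:r1:] + [:-1,1:] ^ 2 * [:r2:] + [:3:] * \<alpha> + [:-1,1:] ^ 3 * \<beta>"
    and "r0 = 2" "r1 = 1" "r2 = 0"
  shows "\<exists>F. poly F 1 = 3 \<and> Nk 1 F = 3 \<and> Nk 2 F = 3 \<and> Nk 3 F = 3 * Nk 3 (1 + [:-1,1:] ^ 5 * h) \<and> M27 F = 81 * Nk 3 (1 + [:-1,1:] ^ 5 * h)"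
  apply (rule gen_ii[where \<rho>="[:2:] + [:-1,1:] * [:1:] + [:-1,1:] ^ 2 * [:0:]" and \<alpha>=\<alpha> and \<beta>=\<beta> and u="1" and ea="[:0, 1:]" and eb="[:1,1,1,1,1,1,1:] ^ 3"
     and Kz="[:0, -1, 3, -2, -2, 3, -1, 1:]" and Qx="[:0, 2, -7, 8, 2, -16, 18, -2, -16, 18, -3, -12, 13, -3, -7, 9, -1, -8, 9, -2, -4, 4, -2, 1:]" and Qy="[:-1, 1, -9, 0, -3, -3, -2, -3, 9, 1, 6, 0, 4, 2, 0, -1, -3, 3, -1, 1:]"])
  subgoal using assms by simp
  subgoal by (rule poly_eq_poly_eq_iff[THEN iffD1], rule ext, simp, algebra)
  subgoal by (rule poly_eq_poly_eq_iff[THEN iffD1], rule ext, simp, algebra)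
  apply (rule tail_ii_1_a)
  apply (rule tail_ii_1_b)
  subgoal by simp
  subgoal by (simp only: Nk_mult Nk_power Nk_1 N2_neg1 N3_neg1 N2_c2 N2_c4 N2_c5 N2_c7 N3_c2 N3_c4 N3_c5 N3_c7; simp?)
  subgoal by (rule N1_x)
  subgoal by (simp only: Nk_mult Nk_power Nk_1 N2_neg1 N3_neg1 N2_c2 N2_c4 N2_c5 N2_c7 N3_c2 N3_c4 N3_c5 N3_c7; simp?)
  done

lemma case_ii_211:
  fixes h \<alpha> \<beta> :: "int poly" and r0 r1 r2 :: int
  assumes hd: "h = [:r0:] + [:-1,1:] * [:r1:] + [:-1,1:] ^ 2 * [:r2:] + [:3:] * \<alpha> + [:-1,1:] ^ 3 * \<beta>"
    and "r0 = 2" "r1 = 1" "r2 = 1"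
  shows "\<exists>F. poly F 1 = 3 \<and> Nk 1 F = 3 \<and> Nk 2 F = 3 \<and> Nk 3 F = 3 * Nk 3 (1 + [:-1,1:] ^ 5 * h) \<and> M27 F = 81 * Nk 3 (1 + [:-1,1:] ^ 5 * h)"
  apply (rule gen_ii[where \<rho>="[:2:] + [:-1,1:] * [:1:] + [:-1,1:] ^ 2 * [:1:]" and \<alpha>=\<alpha> and \<beta>=\<beta> and u="[:1,1,1,1:]" and ea="[:0, 1:]" and eb="[:1,1,1,1:] * [:1,1,1,1,1,1,1:] ^ 3"
     and Kz="[:7, -5, 9, -12, 9, -3, -7, 12, -9:]" and Qx="[:6, -1, -21, 45, -44, 2, 55, -79, 45, 24, -68, 52, 4, -47, 40, 0, -28, 19, 16, -40, 33, -5, -19, 21, -9:]" and Qy="[:5, 3, -23, 8, -37, 8, -22, -11, 15, -12, 41, -15, 30, -5, 18, -2, -2, 6, -7, 12, -9:]"])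
  subgoal using assms by simp
  subgoal by (rule poly_eq_poly_eq_iff[THEN iffD1], rule ext, simp, algebra)
  subgoal by (rule poly_eq_poly_eq_iff[THEN iffD1], rule ext, simp, algebra)
  apply (rule tail_ii_c4_a)
  apply (rule tail_ii_c4_b)
  subgoal by simp
  subgoal by (simp only: Nk_mult Nk_power Nk_1 N2_neg1 N3_neg1 N2_c2 N2_c4 N2_c5 N2_c7 N3_c2 N3_c4 N3_c5 N3_c7; simp?)
  subgoal by (rule N1_x)
  subgoal by (simp only: Nk_mult Nk_power Nk_1 N2_neg1 N3_neg1 N2_c2 N2_c4 N2_c5 N2_c7 N3_c2 N3_c4 N3_c5 N3_c7; simp?)
  done

lemma case_ii_212:
  fixes h \<alpha> \<beta> :: "int poly" and r0 r1 r2 :: int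
  assumes hd: "h = [:r0:] + [:-1,1:] * [:r1:] + [:-1,1:] ^ 2 * [:r2:] + [:3:] * \<alpha> + [:-1,1:] ^ 3 * \<beta>"
    and "r0 = 2" "r1 = 1" "r2 = 2"
  shows "\<exists>F. poly F 1 = 3 \<and> Nk 1 F = 3 \<and> Nk 2 F = 3 \<and> Nk 3 F = 3 * Nk 3 (1 + [:-1,1:] ^ 5 * h) \<and> M27 F = 81 * Nk 3 (1 + [:-1,1:] ^ 5 * h)"
  apply (rule gen_ii[where \<rho>="[:2:] + [:-1,1:] * [:1:] + [:-1,1:] ^ 2 * [:2:]" and \<alpha>=\<alpha> and \<beta>=\<beta> and u="[:1,1,1,1,1,1,1:]" and ea="[:0, 1:]" and eb="[:1,1,1,1,1,1,1:] * [:1,1,1,1,1,1,1:] ^ 3"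
     and Kz="[:-15, 18, -5, -10, 17, -13, 4, -1, 6:]" and Qx="[:-17, 52, -86, 94, -56, -13, 60, -44, -28, 104, -128, 84, -4, -50, 39, 15, -55, 46, -6, -22, 23, -11, 5, -7, 6:]" and Qy="[:-18, 33, -58, 68, -96, 62, -87, 34, -49, 20, -16, 29, 12, 19, 23, -2, 27, -13, 7, 0, 6:]"])
  subgoal using assms by simp
  subgoal by (rule poly_eq_poly_eq_iff[THEN iffD1], rule ext, simp, algebra)
  subgoal by (rule poly_eq_poly_eq_iff[THEN iffD1], rule ext, simp, algebra)
  apply (rule tail_ii_c7_a)
  apply (rule tail_ii_c7_b)
  subgoal by simp
  subgoal by (simp only: Nk_mult Nk_power Nk_1 N2_neg1 N3_neg1 N2_c2 N2_c4 N2_c5 N2_c7 N3_c2 N3_c4 N3_c5 N3_c7; simp?)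
  subgoal by (rule N1_x)
  subgoal by (simp only: Nk_mult Nk_power Nk_1 N2_neg1 N3_neg1 N2_c2 N2_c4 N2_c5 N2_c7 N3_c2 N3_c4 N3_c5 N3_c7; simp?)
  done

lemma case_ii_220:
  fixes h \<alpha> \<beta> :: "int poly" and r0 r1 r2 :: int
  assumes hd: "h = [:r0:] + [:-1,1:] * [:r1:] + [:-1,1:] ^ 2 * [:r2:] + [:3:] * \<alpha> + [:-1,1:] ^ 3 * \<beta>"
    and "r0 = 2" "r1 = 2" "r2 = 0"
  shows "\<exists>F. poly F 1 = 3 \<and> Nk 1 F = 3 \<and> Nk 2 F = 3 \<and> Nk 3 F = 3 * Nk 3 (1 + [:-1,1:] ^ 5 * h) \<and> M27 F = 81 * Nk 3 (1 + [:-1,1:] ^ 5 * h)"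
  apply (rule gen_ii[where \<rho>="[:2:] + [:-1,1:] * [:2:] + [:-1,1:] ^ 2 * [:0:]" and \<alpha>=\<alpha> and \<beta>=\<beta> and u="1" and ea="[:0, 1:]" and eb="1"
     and Kz="[:0, 1, -4, 10, -13, 10, -4, 1:]" and Qx="[:1, -4, 12, -28, 43, -35, 0, 34, -34, 0, 35, -39, 14, 12, -16, 0, 17, -17, 0, 18, -22, 14, -5, 1:]" and Qy="[:0, -1, 8, -20, 28, -28, 28, -28, 20, -8, 1, 4, -10, 14, -14, 14, -14, 10, -4, 1:]"])
  subgoal using assms by simp
  subgoal by (rule poly_eq_poly_eq_iff[THEN iffD1], rule ext, simp, algebra)
  subgoal by (rule poly_eq_poly_eq_iff[THEN iffD1], rule ext, simp, algebra)
  apply (rule tail_ii_1_a)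
  apply (rule tail_ii_1_b)
  subgoal by simp
  subgoal by (simp only: Nk_mult Nk_power Nk_1 N2_neg1 N3_neg1 N2_c2 N2_c4 N2_c5 N2_c7 N3_c2 N3_c4 N3_c5 N3_c7; simp?)
  subgoal by (rule N1_x)
  subgoal by (simp only: Nk_mult Nk_power Nk_1 N2_neg1 N3_neg1 N2_c2 N2_c4 N2_c5 N2_c7 N3_c2 N3_c4 N3_c5 N3_c7; simp?)
  done

lemma case_ii_221:
  fixes h \<alpha> \<beta> :: "int poly" and r0 r1 r2 :: int
  assumes hd: "h = [:r0:] + [:-1,1:] * [:r1:] + [:-1,1:] ^ 2 * [:r2:] + [:3:] * \<alpha> + [:-1,1:] ^ 3 * \<beta>"
    and "r0 = 2" "r1 = 2" "r2 = 1"
  shows "\<exists>F. poly F 1 = 3 \<and> Nk 1 F = 3 \<and> Nk 2 F = 3 \<and> Nk 3 F = 3 * Nk 3 (1 + [:-1,1:] ^ 5 * h) \<and> M27 F = 81 * Nk 3 (1 + [:-1,1:] ^ 5 * h)"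
  apply (rule gen_ii[where \<rho>="[:2:] + [:-1,1:] * [:2:] + [:-1,1:] ^ 2 * [:1:]" and \<alpha>=\<alpha> and \<beta>=\<beta> and u="[:1,1,1,1:]" and ea="[:0, 1:]" and eb="[:1,1,1,1:]"
     and Kz="[:4, -3, 4, -5, 5, -2, -2, 5, -5:]" and Qx="[:4, -3, -7, 20, -23, 7, 20, -36, 26, 3, -27, 27, -5, -17, 20, -5, -10, 10, 4, -17, 17, -5, -7, 10, -5:]" and Qy="[:3, 2, -7, 7, -11, 11, -6, 0, 6, -8, 13, -14, 9, -8, 6, -3, 0, 3, -2, 5, -5:]"])
  subgoal using assms by simp
  subgoal by (rule poly_eq_poly_eq_iff[THEN iffD1], rule ext, simp, algebra)
  subgoal by (rule poly_eq_poly_eq_iff[THEN iffD1], rule ext, simp, algebra)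
  apply (rule tail_ii_c4_a)
  apply (rule tail_ii_c4_b)
  subgoal by simp
  subgoal by (simp only: Nk_mult Nk_power Nk_1 N2_neg1 N3_neg1 N2_c2 N2_c4 N2_c5 N2_c7 N3_c2 N3_c4 N3_c5 N3_c7; simp?)
  subgoal by (rule N1_x)
  subgoal by (simp only: Nk_mult Nk_power Nk_1 N2_neg1 N3_neg1 N2_c2 N2_c4 N2_c5 N2_c7 N3_c2 N3_c4 N3_c5 N3_c7; simp?)
  done

lemma case_ii_222:
  fixes h \<alpha> \<beta> :: "int poly" and r0 r1 r2 :: int
  assumes hd: "h = [:r0:] + [:-1,1:] * [:r1:] + [:-1,1:] ^ 2 * [:r2:] + [:3:] * \<alpha> + [:-1,1:] ^ 3 * \<beta>"
    and "r0 = 2" "r1 = 2" "r2 = 2"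
  shows "\<exists>F. poly F 1 = 3 \<and> Nk 1 F = 3 \<and> Nk 2 F = 3 \<and> Nk 3 F = 3 * Nk 3 (1 + [:-1,1:] ^ 5 * h) \<and> M27 F = 81 * Nk 3 (1 + [:-1,1:] ^ 5 * h)"
  apply (rule gen_ii[where \<rho>="[:2:] + [:-1,1:] * [:2:] + [:-1,1:] ^ 2 * [:2:]" and \<alpha>=\<alpha> and \<beta>=\<beta> and u="[:1,1,1,1,1,1,1:]" and ea="[:0, 1:]" and eb="[:1,1,1,1,1,1,1:]"
     and Kz="[:-10, 13, -6, -6, 13, -10, 4, -1, 4:]" and Qx="[:-11, 35, -61, 70, -46, -2, 40, -36, -12, 70, -95, 69, -12, -32, 32, 4, -37, 37, -10, -14, 18, -10, 5, -5, 4:]" and Qy="[:-12, 25, -38, 56, -62, 60, -52, 40, -30, 18, -15, 14, -4, 0, 4, -10, 14, -14, 4, -1, 4:]"])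
  subgoal using assms by simp
  subgoal by (rule poly_eq_poly_eq_iff[THEN iffD1], rule ext, simp, algebra)
  subgoal by (rule poly_eq_poly_eq_iff[THEN iffD1], rule ext, simp, algebra)
  apply (rule tail_ii_c7_a)
  apply (rule tail_ii_c7_b)
  subgoal by simp
  subgoal by (simp only: Nk_mult Nk_power Nk_1 N2_neg1 N3_neg1 N2_c2 N2_c4 N2_c5 N2_c7 N3_c2 N3_c4 N3_c5 N3_c7; simp?)
  subgoal by (rule N1_x)
  subgoal by (simp only: Nk_mult Nk_power Nk_1 N2_neg1 N3_neg1 N2_c2 N2_c4 N2_c5 N2_c7 N3_c2 N3_c4 N3_c5 N3_c7; simp?)
  done

lemma taylor3:
  fixes h :: "int poly"
  shows "\<exists>c0 c1 c2 \<beta>. h = [:c0:] + [:-1,1:] * [:c1:] + [:-1,1:] ^ 2 * [:c2:] + [:-1,1:] ^ 3 * \<beta> \<and> c0 = poly h 1"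
proof -
  define q1 where "q1 = synthetic_div h 1"
  define q2 where "q2 = synthetic_div q1 1"
  define q3 where "q3 = synthetic_div q2 1"
  have e1: "h = [:-1,1:] * q1 + [:poly h 1:]" using synthetic_div_correct'[of 1 h] by (simp add: q1_def)
  have e2: "q1 = [:-1,1:] * q2 + [:poly q1 1:]" using synthetic_div_correct'[of 1 q1] by (simp add: q2_def)
  have e3: "q2 = [:-1,1:] * q3 + [:poly q2 1:]" using synthetic_div_correct'[of 1 q2] by (simp add: q3_def)
  have "h = [:poly h 1:] + [:-1,1:] * [:poly q1 1:] + [:-1,1:] ^ 2 * [:poly q2 1:] + [:-1,1:] ^ 3 * q3"
    using e1 e2 e3 by algebra
  then show ?thesis by blast
qed

lemma resid: "[:c:] = [:c mod 3:] + [:3:] * [:c div 3 :: int:]"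
  by simp

lemma decomp:
  fixes h :: "int poly"
  assumes "\<not> 3 dvd poly h 1"
  shows "\<exists>r0 r1 r2 \<alpha> \<beta>. h = [:r0:] + [:-1,1:] * [:r1:] + [:-1,1:] ^ 2 * [:r2:] + [:3:] * \<alpha> + [:-1,1:] ^ 3 * \<beta>
     \<and> (r0 = 1 \<or> r0 = 2) \<and> (r1 = 0 \<or> r1 = 1 \<or> r1 = 2) \<and> (r2 = 0 \<or> r2 = 1 \<or> r2 = 2)"
proof -
  obtain c0 c1 c2 \<beta> where h: "h = [:c0:] + [:-1,1:] * [:c1:] + [:-1,1:] ^ 2 * [:c2:] + [:-1,1:] ^ 3 * \<beta>"
    and c0: "c0 = poly h 1" using taylor3 by blast
  define \<alpha> where "\<alpha> = [:c0 div 3:] + [:-1,1:] * [:c1 div 3:] + [:-1,1:] ^ 2 * [:c2 div 3:]"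
  have "h = [:c0 mod 3:] + [:-1,1:] * [:c1 mod 3:] + [:-1,1:] ^ 2 * [:c2 mod 3:] + [:3:] * \<alpha> + [:-1,1:] ^ 3 * \<beta>"
    unfolding h \<alpha>_def using resid[of c0] resid[of c1] resid[of c2] by algebra
  moreover have "c0 mod 3 = 1 \<or> c0 mod 3 = 2" using assms c0 by presburger
  moreover have "c1 mod 3 = 0 \<or> c1 mod 3 = 1 \<or> c1 mod 3 = 2" by presburger
  moreover have "c2 mod 3 = 0 \<or> c2 mod 3 = 1 \<or> c2 mod 3 = 2" by presburger
  ultimately show ?thesis
    apply -
    apply (rule exI[where x="c0 mod 3"], rule exI[where x="c1 mod 3"], rule exI[where x="c2 mod 3"],
      rule exI[where x=\<alpha>], rule exI[where x=\<beta>])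
    by blast
qed

lemma part_i:
  fixes h :: "int poly"
  assumes "\<not> 3 dvd poly h 1"
  shows "\<exists>F. poly F 1 = 3 \<and> Nk 1 F = 3 \<and> Nk 3 F = 3 \<and> Nk 2 F = 3 * Nk 2 (1 + [:-1,1:] ^ 5 * h) \<and> M27 F = 81 * Nk 2 (1 + [:-1,1:] ^ 5 * h)"
proof -
  obtain r0 r1 r2 \<alpha> \<beta> where hd: "h = [:r0:] + [:-1,1:] * [:r1:] + [:-1,1:] ^ 2 * [:r2:] + [:3:] * \<alpha> + [:-1,1:] ^ 3 * \<beta>"
    and r: "(r0 = 1 \<or> r0 = 2)" "(r1 = 0 \<or> r1 = 1 \<or> r1 = 2)" "(r2 = 0 \<or> r2 = 1 \<or> r2 = 2)"
    using decomp[OF assms] by blast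
  consider (a1) "r0 = 1" | (a2) "r0 = 2" using r(1) by blast
  then show ?thesis
  proof cases
    case a1
    consider (b0) "r1 = 0" | (b1) "r1 = 1" | (b2) "r1 = 2" using r(2) by blast
    then show ?thesis
    proof cases
      case b0
      consider (c0) "r2 = 0" | (c1) "r2 = 1" | (c2) "r2 = 2" using r(3) by blast
      then show ?thesis
      proof cases
        case c0
        show ?thesis by (rule case_i_100[OF hd a1 b0 c0])
      next
        case c1
        show ?thesis by (rule case_i_101[OF hd a1 b0 c1])
      next
        case c2
        show ?thesis by (rule case_i_102[OF hd a1 b0 c2])
      qed
    next
      case b1
      consider (c0) "r2 = 0" | (c1) "r2 = 1" | (c2) "r2 = 2" using r(3) by blast
      then show ?thesis
      proof cases
        case c0
        show ?thesis by (rule case_i_110[OF hd a1 b1 c0])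
      next
        case c1
        show ?thesis by (rule case_i_111[OF hd a1 b1 c1])
      next
        case c2
        show ?thesis by (rule case_i_112[OF hd a1 b1 c2])
      qed
    next
      case b2
      consider (c0) "r2 = 0" | (c1) "r2 = 1" | (c2) "r2 = 2" using r(3) by blast
      then show ?thesis
      proof cases
        case c0
        show ?thesis by (rule case_i_120[OF hd a1 b2 c0])
      next
        case c1
        show ?thesis by (rule case_i_121[OF hd a1 b2 c1])
      next
        case c2
        show ?thesis by (rule case_i_122[OF hd a1 b2 c2])
      qed
    qed
  next
    case a2
    consider (b0) "r1 = 0" | (b1) "r1 = 1" | (b2) "r1 = 2" using r(2) by blast
    then show ?thesis
    proof cases
      case b0
      consider (c0) "r2 = 0" | (c1) "r2 = 1" | (c2) "r2 = 2" using r(3) by blast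
      then show ?thesis
      proof cases
        case c0
        show ?thesis by (rule case_i_200[OF hd a2 b0 c0])
      next
        case c1
        show ?thesis by (rule case_i_201[OF hd a2 b0 c1])
      next
        case c2
        show ?thesis by (rule case_i_202[OF hd a2 b0 c2])
      qed
    next
      case b1
      consider (c0) "r2 = 0" | (c1) "r2 = 1" | (c2) "r2 = 2" using r(3) by blast
      then show ?thesis
      proof cases
        case c0
        show ?thesis by (rule case_i_210[OF hd a2 b1 c0])
      next
        case c1
        show ?thesis by (rule case_i_211[OF hd a2 b1 c1])
      next
        case c2
        show ?thesis by (rule case_i_212[OF hd a2 b1 c2])
      qed
    next
      case b2
      consider (c0) "r2 = 0" | (c1) "r2 = 1" | (c2) "r2 = 2" using r(3) by blast
      then show ?thesis
      proof cases
        case c0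
        show ?thesis by (rule case_i_220[OF hd a2 b2 c0])
      next
        case c1
        show ?thesis by (rule case_i_221[OF hd a2 b2 c1])
      next
        case c2
        show ?thesis by (rule case_i_222[OF hd a2 b2 c2])
      qed
    qed
  qed
qed

lemma part_ii:
  fixes h :: "int poly"
  assumes "\<not> 3 dvd poly h 1"
  shows "\<exists>F. poly F 1 = 3 \<and> Nk 1 F = 3 \<and> Nk 2 F = 3 \<and> Nk 3 F = 3 * Nk 3 (1 + [:-1,1:] ^ 5 * h) \<and> M27 F = 81 * Nk 3 (1 + [:-1,1:] ^ 5 * h)"
proof -
  obtain r0 r1 r2 \<alpha> \<beta> where hd: "h = [:r0:] + [:-1,1:] * [:r1:] + [:-1,1:] ^ 2 * [:r2:] + [:3:] * \<alpha> + [:-1,1:] ^ 3 * \<beta>"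
    and r: "(r0 = 1 \<or> r0 = 2)" "(r1 = 0 \<or> r1 = 1 \<or> r1 = 2)" "(r2 = 0 \<or> r2 = 1 \<or> r2 = 2)"
    using decomp[OF assms] by blast
  consider (a1) "r0 = 1" | (a2) "r0 = 2" using r(1) by blast
  then show ?thesis
  proof cases
    case a1
    consider (b0) "r1 = 0" | (b1) "r1 = 1" | (b2) "r1 = 2" using r(2) by blast
    then show ?thesis
    proof cases
      case b0
      consider (c0) "r2 = 0" | (c1) "r2 = 1" | (c2) "r2 = 2" using r(3) by blast
      then show ?thesis
      proof cases
        case c0
        show ?thesis by (rule case_ii_100[OF hd a1 b0 c0])
      next
        case c1
        show ?thesis by (rule case_ii_101[OF hd a1 b0 c1])
      next
        case c2
        show ?thesis by (rule case_ii_102[OF hd a1 b0 c2])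
      qed
    next
      case b1
      consider (c0) "r2 = 0" | (c1) "r2 = 1" | (c2) "r2 = 2" using r(3) by blast
      then show ?thesis
      proof cases
        case c0
        show ?thesis by (rule case_ii_110[OF hd a1 b1 c0])
      next
        case c1
        show ?thesis by (rule case_ii_111[OF hd a1 b1 c1])
      next
        case c2
        show ?thesis by (rule case_ii_112[OF hd a1 b1 c2])
      qed
    next
      case b2
      consider (c0) "r2 = 0" | (c1) "r2 = 1" | (c2) "r2 = 2" using r(3) by blast
      then show ?thesis
      proof cases
        case c0
        show ?thesis by (rule case_ii_120[OF hd a1 b2 c0])
      next
        case c1
        show ?thesis by (rule case_ii_121[OF hd a1 b2 c1])
      next
        case c2
        show ?thesis by (rule case_ii_122[OF hd a1 b2 c2])
      qed
    qed
  next
    case a2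
    consider (b0) "r1 = 0" | (b1) "r1 = 1" | (b2) "r1 = 2" using r(2) by blast
    then show ?thesis
    proof cases
      case b0
      consider (c0) "r2 = 0" | (c1) "r2 = 1" | (c2) "r2 = 2" using r(3) by blast
      then show ?thesis
      proof cases
        case c0
        show ?thesis by (rule case_ii_200[OF hd a2 b0 c0])
      next
        case c1
        show ?thesis by (rule case_ii_201[OF hd a2 b0 c1])
      next
        case c2
        show ?thesis by (rule case_ii_202[OF hd a2 b0 c2])
      qed
    next
      case b1
      consider (c0) "r2 = 0" | (c1) "r2 = 1" | (c2) "r2 = 2" using r(3) by blast
      then show ?thesis
      proof cases
        case c0
        show ?thesis by (rule case_ii_210[OF hd a2 b1 c0])
      next
        case c1
        show ?thesis by (rule case_ii_211[OF hd a2 b1 c1])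
      next
        case c2
        show ?thesis by (rule case_ii_212[OF hd a2 b1 c2])
      qed
    next
      case b2
      consider (c0) "r2 = 0" | (c1) "r2 = 1" | (c2) "r2 = 2" using r(3) by blast
      then show ?thesis
      proof cases
        case c0
        show ?thesis by (rule case_ii_220[OF hd a2 b2 c0])
      next
        case c1
        show ?thesis by (rule case_ii_221[OF hd a2 b2 c1])
      next
        case c2
        show ?thesis by (rule case_ii_222[OF hd a2 b2 c2])
      qed
    qed
  qed
qed

theorem lemma4p5:
  fixes m :: int
  shows "((\<exists>h :: int poly. \<not> 3 dvd poly h 1 \<and>
              of_int m = Nk 2 (1 + [:-1, 1:] ^ 5 * h)) \<longrightarrow>
          (\<exists>F :: int poly. poly F 1 = 3 \<and> Nk 1 F = 3 \<and> Nk 3 F = 3 \<and>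
              Nk 2 F = of_int (3 * m) \<and> M27 F = of_int (3 ^ 4 * m)))
       \<and> ((\<exists>h :: int poly. \<not> 3 dvd poly h 1 \<and>
              of_int m = Nk 3 (1 + [:-1, 1:] ^ 5 * h)) \<longrightarrow>
          (\<exists>F :: int poly. poly F 1 = 3 \<and> Nk 1 F = 3 \<and> Nk 2 F = 3 \<and>
              Nk 3 F = of_int (3 * m) \<and> M27 F = of_int (3 ^ 4 * m)))"
proof (intro conjI impI)
  assume "\<exists>h :: int poly. \<not> 3 dvd poly h 1 \<and> of_int m = Nk 2 (1 + [:-1, 1:] ^ 5 * h)"
  then obtain h :: "int poly" where h: "\<not> 3 dvd poly h 1" and hm: "of_int m = Nk 2 (1 + [:-1, 1:] ^ 5 * h)"
    by blast
  obtain F where F: "poly F 1 = 3" "Nk 1 F = 3" "Nk 3 F = 3"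
    "Nk 2 F = 3 * Nk 2 (1 + [:-1,1:] ^ 5 * h)" "M27 F = 81 * Nk 2 (1 + [:-1,1:] ^ 5 * h)"
    using part_i[OF h] by blast
  have "Nk 2 F = of_int (3 * m)" "M27 F = of_int (3 ^ 4 * m)"
    using F(4,5) hm[symmetric] by simp_all
  then show "\<exists>F :: int poly. poly F 1 = 3 \<and> Nk 1 F = 3 \<and> Nk 3 F = 3 \<and>
              Nk 2 F = of_int (3 * m) \<and> M27 F = of_int (3 ^ 4 * m)"
    using F(1,2,3) by blast
next
  assume "\<exists>h :: int poly. \<not> 3 dvd poly h 1 \<and> of_int m = Nk 3 (1 + [:-1, 1:] ^ 5 * h)"
  then obtain h :: "int poly" where h: "\<not> 3 dvd poly h 1" and hm: "of_int m = Nk 3 (1 + [:-1, 1:] ^ 5 * h)"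
    by blast
  obtain F where F: "poly F 1 = 3" "Nk 1 F = 3" "Nk 2 F = 3"
    "Nk 3 F = 3 * Nk 3 (1 + [:-1,1:] ^ 5 * h)" "M27 F = 81 * Nk 3 (1 + [:-1,1:] ^ 5 * h)"
    using part_ii[OF h] by blast
  have "Nk 3 F = of_int (3 * m)" "M27 F = of_int (3 ^ 4 * m)"
    using F(4,5) hm[symmetric] by simp_all
  then show "\<exists>F :: int poly. poly F 1 = 3 \<and> Nk 1 F = 3 \<and> Nk 2 F = 3 \<and>
              Nk 3 F = of_int (3 * m) \<and> M27 F = of_int (3 ^ 4 * m)"
    using F(1,2,3) by blast
qed

end
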